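(* There exist universal constants $C_1,C_2>0$ such that the following holds. Let $2<p<\infty$ and $s\in(0,1/2)$ with $\frac1p+s=\frac12$. Then $H^s_{2\pi}\hookrightarrow L^p_{2\pi}$, and for all $f\in H^s_{2\pi}$, $$\|f\|_{L^p_{2\pi}}\le 2\tilde R_p\|f\|_{H^s_{2\pi}},\qquad \tilde R_p^p=C_1\frac{p}{p-2}C_2^{p-2}p^{\frac{p-2}{2}}.$$
   Context: $L^p_{2\pi}$ ($1\le p<\infty$) is the space of (classes of a.e. equal) measurable $2\pi$-periodic functions $f:\mathbb R\to\mathbb C$ with $\|f\|_{L^p_{2\pi}}=\big(\frac1{2\pi}\int_0^{2\pi}|f(t)|^pdt\big)^{1/p}<\infty$. For $f\in L^1_{2\pi}$, $\widehat f(k)=\frac1{2\pi}\int_0^{2\pi}f(t)e^{-ikt}dt$. For $s\ge0$, $H^s_{2\pi}=\{f\in L^2_{2\pi}:\ \sum_{k\in\mathbb Z}(1+k^2)^s|\widehat f(k)|^2<\infty\}$ with norm $\|f\|_{H^s_{2\pi}}=\big(\sum_{k\in\mathbb Z}(1+k^2)^s|\widehat f(k)|^2\big)^{1/2}$. *)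

theory Defs
  imports "HOL-Analysis.Analysis"
begin

text \<open>Measurable 2pi-periodic functions real -> complex (representatives of a.e. classes).\<close>
definition periodic_2pi :: "(real \<Rightarrow> complex) \<Rightarrow> bool" where
  "periodic_2pi f \<longleftrightarrow> f \<in> borel_measurable lborel \<and> (\<forall>x. f (x + 2 * pi) = f x)"

definition in_Lp_2pi :: "real \<Rightarrow> (real \<Rightarrow> complex) \<Rightarrow> bool" where
  "in_Lp_2pi p f \<longleftrightarrow> periodic_2pi f \<and>
     (\<integral>\<^sup>+ t. ennreal (indicator {0..2*pi} t * norm (f t) powr p) \<partial>lborel) < \<infinity>"

definition Lp_norm_2pi :: "real \<Rightarrow> (real \<Rightarrow> complex) \<Rightarrow> real" where
  "Lp_norm_2pi p f = ((1 / (2 * pi)) * (LINT t:{0..2*pi}|lborel. norm (f t) powr p)) powr (1 / p)"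

definition fourier_coeff :: "(real \<Rightarrow> complex) \<Rightarrow> int \<Rightarrow> complex" where
  "fourier_coeff f k = (1 / (2 * pi)) *
     (LINT t:{0..2*pi}|lborel. f t * exp (- (\<i> * of_int k * of_real t)))"

definition in_Hs_2pi :: "real \<Rightarrow> (real \<Rightarrow> complex) \<Rightarrow> bool" where
  "in_Hs_2pi s f \<longleftrightarrow> in_Lp_2pi 2 f \<and>
     (\<lambda>k::int. (1 + (real_of_int k)\<^sup>2) powr s * (norm (fourier_coeff f k))\<^sup>2) summable_on UNIV"

definition Hs_norm_2pi :: "real \<Rightarrow> (real \<Rightarrow> complex) \<Rightarrow> real" where
  "Hs_norm_2pi s f = sqrt (\<Sum>\<^sub>\<infinity>k::int. (1 + (real_of_int k)\<^sup>2) powr s * (norm (fourier_coeff f k))\<^sup>2)"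

end

theory Submission
  imports Defs
begin
definition E :: "int \<Rightarrow> real \<Rightarrow> complex" where
  "E k x = exp (\<i> * of_int k * of_real x)"

lemma norm_E [simp]: "norm (E k x) = 1"
  unfolding E_def by (simp add: norm_exp_eq_Re)

lemma E_add: "E k (x + y) = E k x * E k y"
  unfolding E_def by (simp add: algebra_simps flip: exp_add)

lemma E_diff: "E k (x - y) = E k x * exp (- (\<i> * of_int k * of_real y))"
  unfolding E_def by (simp add: algebra_simps flip: exp_add)

lemma E_mult: "E j x * E k x = E (j + k) x"
  unfolding E_def by (simp add: algebra_simps flip: exp_add)

lemma cnj_E: "cnj (E k x) = E (- k) x"
  unfolding E_def by (simp add: exp_cnj)

lemma E_0 [simp]: "E 0 x = 1"
  unfolding E_def by simp

lemma E_at0 [simp]: "E k 0 = 1"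
  unfolding E_def by simp

lemma E_2pi: "E k (2 * pi) = 1"
proof -
  have "E k (2*pi) = exp ((2 * of_int k * pi) * \<i>)"
    unfolding E_def by (simp add: algebra_simps)
  also have "\<dots> = 1" using exp_integer_2pi[of "of_int k"] by simp
  finally show ?thesis .
qed

lemma E_period: "E k (x + 2 * pi) = E k x"
  by (simp add: E_add E_2pi)

lemma E_period_int: "E k (x + 2 * pi * of_int j) = E k x"
proof -
  have "E k (2 * pi * of_int j) = exp ((2 * of_int (k*j) * pi) * \<i>)"
    unfolding E_def by (simp add: algebra_simps)
  also have "\<dots> = 1" using exp_integer_2pi[of "of_int (k*j)"] by simp
  finally show ?thesis by (simp add: E_add)
qed

lemma continuous_on_E [continuous_intros]: "continuous_on S (E k)"
  unfolding E_def by (intro continuous_intros)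

lemma E_has_vector_derivative:
  "(E k has_vector_derivative (\<i> * of_int k * E k x)) (at x within S)"
proof -
  have "((\<lambda>z. exp (\<i> * of_int k * z)) has_field_derivative (\<i> * of_int k * exp (\<i> * of_int k * of_real x))) (at (of_real x))"
    by (auto intro!: derivative_eq_intros)
  from has_vector_derivative_real_field[OF this] show ?thesis
    unfolding E_def[abs_def] by simp
qed

lemma E_has_integral:
  assumes "k \<noteq> 0" "a \<le> b"
  shows "(E k has_integral ((E k b - E k a) / (\<i> * of_int k))) {a..b}"
proof -
  have "((\<lambda>x. E k x / (\<i> * of_int k)) has_vector_derivative E k x) (at x within {a..b})" for x
    using has_vector_derivative_divide[OF E_has_vector_derivative[of k x "{a..b}"], of "\<i> * of_int k"] assms
    by simp
  from fundamental_theorem_of_calculus[OF assms(2) this] show ?thesis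
    by (simp add: diff_divide_distrib)
qed

lemma E_has_integral_period:
  "(E k has_integral (if k = 0 then 2 * pi else 0)) {0..2*pi}"
proof (cases "k = 0")
  case True
  have "E 0 = (\<lambda>x. 1)" by (rule ext) simp
  then show ?thesis using True has_integral_const_real[of "1::complex" 0 "2*pi"]
    by (simp add: scaleR_conv_of_real)
next
  case False
  from E_has_integral[OF this, of 0 "2*pi"] False show ?thesis by (simp add: E_2pi)
qed

definition tp :: "(int \<Rightarrow> complex) \<Rightarrow> int set \<Rightarrow> real \<Rightarrow> complex" where
  "tp c S x = (\<Sum>k\<in>S. c k * E k x)"

lemma continuous_on_tp [continuous_intros]: "continuous_on A (tp c S)"
  unfolding tp_def by (intro continuous_intros)

lemma norm_tp_le: "norm (tp c S x) \<le> (\<Sum>k\<in>S. norm (c k))"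
  unfolding tp_def by (rule order.trans[OF norm_sum]) (simp add: norm_mult)

lemma tp_sq_expand:
  "tp c S x * cnj (tp c S x) = (\<Sum>j\<in>S. \<Sum>k\<in>S. c j * cnj (c k) * E (j - k) x)"
proof -
  have "tp c S x * cnj (tp c S x) = (\<Sum>j\<in>S. \<Sum>k\<in>S. c j * cnj (c k) * (E j x * E (-k) x))"
    unfolding tp_def by (simp add: sum_distrib_left sum_distrib_right cnj_E mult_ac) (rule sum.swap)
  then show ?thesis by (simp add: E_mult)
qed

lemma tp_orth:
  assumes "finite S"
  shows "((\<lambda>x. (norm (tp c S x))\<^sup>2) has_integral (2 * pi * (\<Sum>k\<in>S. (norm (c k))\<^sup>2))) {0..2*pi}"
proof -
  have "((\<lambda>x. \<Sum>j\<in>S. \<Sum>k\<in>S. c j * cnj (c k) * E (j - k) x) has_integral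
        (\<Sum>j\<in>S. \<Sum>k\<in>S. c j * cnj (c k) * of_real (if j - k = 0 then 2 * pi else 0))) {0..2*pi}"
    by (intro has_integral_sum assms has_integral_mult_right E_has_integral_period)
  also have "(\<Sum>j\<in>S. \<Sum>k\<in>S. c j * cnj (c k) * of_real (if j - k = 0 then 2 * pi else 0))
      = (\<Sum>j\<in>S. c j * cnj (c j) * of_real (2 * pi))"
  proof (rule sum.cong[OF refl])
    fix j assume "j \<in> S"
    have "(\<Sum>k\<in>S. c j * cnj (c k) * of_real (if j - k = 0 then 2 * pi else 0))
       = (\<Sum>k\<in>S. if k = j then c j * cnj (c k) * of_real (2 * pi) else 0)"
      by (rule sum.cong) auto
    also have "\<dots> = c j * cnj (c j) * of_real (2 * pi)"
      using \<open>j \<in> S\<close> assms by (simp add: sum.delta)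
    finally show "(\<Sum>k\<in>S. c j * cnj (c k) * of_real (if j - k = 0 then 2 * pi else 0)) = c j * cnj (c j) * of_real (2 * pi)" .
  qed
  finally have "((\<lambda>x. tp c S x * cnj (tp c S x)) has_integral (\<Sum>j\<in>S. c j * cnj (c j) * of_real (2 * pi))) {0..2*pi}"
    by (simp add: tp_sq_expand)
  from has_integral_linear[OF this bounded_linear_Re]
  have "((\<lambda>x. Re (tp c S x * cnj (tp c S x))) has_integral Re (\<Sum>j\<in>S. c j * cnj (c j) * of_real (2 * pi))) {0..2*pi}"
    by (simp add: o_def)
  moreover have "Re (z * cnj z) = (norm z)\<^sup>2" for z :: complex
    by (simp add: complex_mult_cnj cmod_def)
  moreover have "Re (\<Sum>j\<in>S. c j * cnj (c j) * of_real (2 * pi)) = 2 * pi * (\<Sum>k\<in>S. (norm (c k))\<^sup>2)"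
    by (simp add: Re_sum complex_mult_cnj cmod_def sum_distrib_left mult_ac)
  ultimately show ?thesis by simp
qed

definition wt :: "real \<Rightarrow> int \<Rightarrow> real" where
  "wt s k = (1 + (real_of_int k)\<^sup>2) powr s"

lemma wt_pos: "wt s k > 0"
proof -
  have "1 + (real_of_int k)\<^sup>2 > 0" by (simp add: add_pos_nonneg)
  then show ?thesis unfolding wt_def by simp
qed

lemma concave_step:
  fixes a :: real and n :: nat
  assumes a: "0 < a" "a \<le> 1"
  shows "a * real (Suc n) powr (a - 1) \<le> real (Suc n) powr a - real n powr a"
proof (cases "n = 0")
  case True
  then show ?thesis using a by simp
next
  case False
  then have n0: "real n > 0" by simp
  have "\<exists>z. real n < z \<and> z < real n + 1 \<and>
      (real n + 1) powr a - real n powr a = ((real n + 1) - real n) * (a * z powr (a - 1))"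
    by (rule MVT2) (use n0 in \<open>auto intro!: has_real_derivative_powr\<close>)
  then obtain z where z: "real n < z" "z < real n + 1"
    and eq: "(real n + 1) powr a - real n powr a = a * z powr (a - 1)" by auto
  have "real (Suc n) powr (a - 1) \<le> z powr (a - 1)"
    using z n0 a by (intro powr_mono2') auto
  then show ?thesis using eq a by (simp add: add.commute)
qed

lemma int_interval_Suc:
  "{- int (Suc n)..int (Suc n)} = insert (int (Suc n)) (insert (- int (Suc n)) {- int n..int n})"
  by auto

lemma sum_inv_wt:
  fixes p s :: real
  assumes p: "p > 2" and ps: "1/p + s = 1/2"
  shows "(\<Sum>k\<in>{- int n..int n}. 1 / wt s k) \<le> 1 + p * real n powr (2/p)"
proof (induction n)
  case 0
  then show ?case by (simp add: wt_def)
next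
  case (Suc n)
  define a where "a = 2/p"
  have a: "0 < a" "a \<le> 1" using p by (auto simp: a_def)
  have s_eq: "s = (1 - a) / 2" using ps p by (simp add: a_def field_simps)
  have w: "1 / wt s k \<le> real (Suc n) powr (a - 1)" if "\<bar>k\<bar> = int (Suc n)" for k
  proof -
    have k2: "(real_of_int k)\<^sup>2 = (real (Suc n))\<^sup>2"
    proof -
      have "(real_of_int k)\<^sup>2 = (real_of_int \<bar>k\<bar>)\<^sup>2" by simp
      then show ?thesis using that by simp
    qed
    have "1 / wt s k = (1 + (real (Suc n))\<^sup>2) powr (-s)"
      unfolding wt_def k2 by (simp add: powr_minus_divide)
    also have "\<dots> \<le> ((real (Suc n))\<^sup>2) powr (-s)"
      using s_eq a by (intro powr_mono2') auto
    also have "\<dots> = real (Suc n) powr (a - 1)"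
    proof -
      define y where "y = real (Suc n)"
      have y: "y > 0" unfolding y_def by simp
      have "(y\<^sup>2) powr (-s) = (y powr 2) powr (-s)" using y by (simp add: powr_numeral)
      also have "\<dots> = y powr (a - 1)" unfolding powr_powr s_eq by (rule arg_cong[where f="\<lambda>e. y powr e"]) (simp add: field_simps)
      finally show ?thesis unfolding y_def .
    qed
    finally show ?thesis .
  qed
  have "(\<Sum>k\<in>{- int (Suc n)..int (Suc n)}. 1 / wt s k)
       = 1 / wt s (int (Suc n)) + 1 / wt s (- int (Suc n)) + (\<Sum>k\<in>{- int n..int n}. 1 / wt s k)"
  proof -
    have n1: "int (Suc n) \<notin> insert (- int (Suc n)) {- int n..int n}" by auto
    have n2: "- int (Suc n) \<notin> {- int n..int n}" by auto
    show ?thesis unfolding int_interval_Suc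
      by (simp only: sum.insert[OF _ n1] sum.insert[OF _ n2] finite_insert finite_atLeastAtMost_int)
  qed
  also have "\<dots> \<le> 2 * real (Suc n) powr (a - 1) + (1 + p * real n powr (2/p))"
    using w[of "int (Suc n)"] w[of "- int (Suc n)"] Suc.IH by simp
  also have "\<dots> \<le> 1 + p * real (Suc n) powr (2/p)"
  proof -
    have "a * real (Suc n) powr (a - 1) \<le> real (Suc n) powr a - real n powr a"
      by (rule concave_step[OF a])
    then have "p * (a * real (Suc n) powr (a - 1)) \<le> p * (real (Suc n) powr a - real n powr a)"
      using p by (intro mult_left_mono) auto
    moreover have "p * a = 2" using p by (simp add: a_def)
    ultimately show ?thesis using p by (simp add: a_def algebra_simps)
  qed
  finally show ?case .
qed

lemma geo_sum_le:
  fixes r :: real assumes r: "r > 1"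
  shows "(\<Sum>m\<le>M. r^m) \<le> r^M * (r/(r-1))"
proof -
  have "(\<Sum>m\<le>M. r^m) = (\<Sum>m<Suc M. r^m)" by (simp add: lessThan_Suc_atMost)
  also have "\<dots> = (r^Suc M - 1)/(r - 1)" by (rule geometric_sum) (use r in auto)
  also have "\<dots> \<le> r^Suc M/(r-1)" using r by (simp add: divide_right_mono)
  also have "\<dots> = r^M * (r/(r-1))" by simp
  finally show ?thesis .
qed

lemma r_bound:
  fixes p :: real assumes p: "p > 2"
  shows "2 powr (p-2) / (2 powr (p-2) - 1) \<le> p/(p-2)"
proof -
  define x where "x = p - 2"
  have x: "x > 0" using p by (simp add: x_def)
  have "2 powr x = exp (x * ln 2)" by (simp add: powr_def)
  also have "\<dots> \<ge> 1 + x * ln 2" by (rule exp_ge_add_one_self)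
  finally have "2 powr x \<ge> 1 + x * ln 2" .
  moreover have "x * ln 2 \<ge> x * (1/2)" using ln2_ge_two_thirds x by (intro mult_left_mono) auto
  ultimately have r: "2 powr x \<ge> 1 + x/2" by simp
  have r1: "2 powr x - 1 > 0" using r x by simp
  have "2 powr x / (2 powr x - 1) \<le> (x+2)/x"
    using r r1 x by (simp add: divide_simps) (simp add: algebra_simps)
  then show ?thesis by (simp add: x_def)
qed

lemma two_pow_powr: "((2::real)^m) powr x = (2 powr x)^m"
proof -
  have "(2::real)^m = 2 powr (real m)" by (simp add: powr_realpow)
  then have "((2::real)^m) powr x = 2 powr (real m * x)" by (simp add: powr_powr)
  also have "\<dots> = (2 powr x) powr (real m)" by (simp add: powr_powr mult.commute)
  also have "\<dots> = (2 powr x)^m" by (simp add: powr_realpow)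
  finally show ?thesis .
qed

lemma geo_k:
  fixes p D :: real and J :: "nat set"
  assumes p: "p > 2" and J: "finite J" and JD: "\<And>m. m \<in> J \<Longrightarrow> 4^m < D"
  shows "(\<Sum>m\<in>J. ((2::real)^m) powr (p-2)) \<le> (p/(p-2)) * D powr ((p-2)/2)"
proof (cases "J = {}")
  case True
  then show ?thesis using p by simp
next
  case False
  define M where "M = Max J"
  have MJ: "M \<in> J" using J False by (simp add: M_def)
  have sub: "J \<subseteq> {..M}" using J by (auto simp: M_def)
  define r where "r = (2::real) powr (p-2)"
  have r1: "r > 1" using p by (simp add: r_def)
  have "(\<Sum>m\<in>J. ((2::real)^m) powr (p-2)) = (\<Sum>m\<in>J. r^m)" by (simp add: two_pow_powr r_def)
  also have "\<dots> \<le> (\<Sum>m\<le>M. r^m)" using sub r1 by (intro sum_mono2) auto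
  also have "\<dots> \<le> r^M * (r/(r-1))" by (rule geo_sum_le[OF r1])
  also have "\<dots> \<le> D powr ((p-2)/2) * (p/(p-2))"
  proof (rule mult_mono)
    have "r^M = ((4::real)^M) powr ((p-2)/2)"
    proof -
      have e1: "((2::real)^M)^2 = 2^(M*2)" by (rule power_mult[symmetric])
      have e2: "(4::real)^M = 2^(2*M)" by (simp add: power_mult)
      have "((4::real)^M) powr ((p-2)/2) = ((2^M)^2) powr ((p-2)/2)"
        by (simp only: e1 e2 mult.commute)
      also have "\<dots> = (2^M) powr (2 * ((p-2)/2))"
      proof -
        have "((2::real)^M)^2 = (2^M) powr 2" by (subst powr_numeral) auto
        then show ?thesis by (simp only: powr_powr)
      qed
      also have "\<dots> = r^M"
      proof -
        have e: "2 * ((p-2)/2) = p-2" by simp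
        show ?thesis unfolding r_def by (simp only: e two_pow_powr)
      qed
      finally show ?thesis by simp
    qed
    also have "\<dots> \<le> D powr ((p-2)/2)"
      using JD[OF MJ] p by (intro powr_mono2) auto
    finally show "r^M \<le> D powr ((p-2)/2)" .
    show "r / (r-1) \<le> p/(p-2)" using r_bound[OF p] by (simp add: r_def)
    show "0 \<le> D powr ((p-2)/2)" by simp
    show "0 \<le> r / (r-1)" using r1 by simp
  qed
  finally show ?thesis by (simp add: mult.commute)
qed

lemma Dk_bound:
  fixes p s :: real and k :: int
  assumes p: "p > 2" and ps: "1/p + s = 1/2"
  shows "(1 + p * real_of_int \<bar>k\<bar> powr (2/p)) powr ((p-2)/2) \<le> (2*p) powr ((p-2)/2) * wt s k"
proof -
  define X where "X = (1 + (real_of_int k)\<^sup>2) powr (1/p)"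
  have X1: "1 \<le> X" unfolding X_def using p by (intro ge_one_powr_ge_zero) auto
  have "real_of_int \<bar>k\<bar> powr (2/p) = (real_of_int \<bar>k\<bar> powr 2) powr (1/p)"
    by (subst powr_powr) simp
  also have "\<dots> = ((real_of_int k)\<^sup>2) powr (1/p)"
  proof -
    have "real_of_int \<bar>k\<bar> powr 2 = (real_of_int \<bar>k\<bar>)\<^sup>2" by (rule powr_numeral) simp
    then show ?thesis by simp
  qed
  also have "\<dots> \<le> X" unfolding X_def using p by (intro powr_mono2) auto
  finally have kX: "real_of_int \<bar>k\<bar> powr (2/p) \<le> X" .
  have D: "1 + p * real_of_int \<bar>k\<bar> powr (2/p) \<le> (2*p) * X"
  proof -
    have "p * real_of_int \<bar>k\<bar> powr (2/p) \<le> p * X" using kX p by (intro mult_left_mono) auto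
    moreover have "1 \<le> p * X" using X1 p by (metis less_trans mult_mono' mult_1 one_less_numeral_iff order_less_imp_le semiring_norm(76) zero_le_one)
    ultimately show ?thesis by linarith
  qed
  have "(1 + p * real_of_int \<bar>k\<bar> powr (2/p)) powr ((p-2)/2) \<le> ((2*p) * X) powr ((p-2)/2)"
    using D p by (intro powr_mono2) auto
  also have "\<dots> = (2*p) powr ((p-2)/2) * X powr ((p-2)/2)"
    using p X1 by (simp add: powr_mult)
  also have "X powr ((p-2)/2) = wt s k"
  proof -
    have "s = (p-2)/(2*p)" using ps p by (simp add: field_simps)
    then show ?thesis unfolding X_def wt_def powr_powr by (simp add: field_simps)
  qed
  finally show ?thesis .
qed

lemma L_bound:
  fixes p s A :: real and c :: "int \<Rightarrow> complex" and S :: "int set" and m :: nat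
  assumes p: "p > 2" and ps: "1/p + s = 1/2" and S: "finite S" and A: "A > 0"
    and cA: "(\<Sum>k\<in>S. wt s k * (norm (c k))\<^sup>2) \<le> A\<^sup>2"
    and Sm: "\<And>k. k \<in> S \<Longrightarrow> 1 + p * real_of_int \<bar>k\<bar> powr (2/p) \<le> 4^m"
  shows "norm (tp c S x) \<le> A * 2^m"
proof -
  have invsum: "(\<Sum>k\<in>S. 1 / wt s k) \<le> 4^m"
  proof (cases "S = {}")
    case False
    define n where "n = nat (Max (abs ` S))"
    have "Max (abs ` S) \<in> abs ` S" using S False by (intro Max_in) auto
    then obtain k0 where k0: "k0 \<in> S" "\<bar>k0\<bar> = Max (abs ` S)" by force
    have n_eq: "real n = real_of_int \<bar>k0\<bar>" unfolding n_def using k0(2)[symmetric] by simp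
    have sub: "S \<subseteq> {- int n..int n}"
    proof
      fix k assume "k \<in> S"
      then have "\<bar>k\<bar> \<le> Max (abs ` S)" using S by (intro Max_ge) auto
      then show "k \<in> {- int n..int n}" unfolding n_def using k0 by auto
    qed
    have "(\<Sum>k\<in>S. 1 / wt s k) \<le> (\<Sum>k\<in>{- int n..int n}. 1 / wt s k)"
      using sub by (intro sum_mono2) (auto simp: wt_pos less_imp_le)
    also have "\<dots> \<le> 1 + p * real n powr (2/p)" by (rule sum_inv_wt[OF p ps])
    also have "\<dots> \<le> 4^m" using Sm[OF k0(1)] n_eq by simp
    finally show ?thesis .
  qed simp
  have "norm (tp c S x) \<le> (\<Sum>k\<in>S. norm (c k))" by (rule norm_tp_le)
  also have "(\<Sum>k\<in>S. norm (c k)) = (\<Sum>k\<in>S. sqrt (1 / wt s k) * sqrt (wt s k * (norm (c k))\<^sup>2))"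
  proof (rule sum.cong[OF refl])
    fix k
    have w: "wt s k > 0" by (rule wt_pos)
    have "sqrt (1 / wt s k) * sqrt (wt s k * (norm (c k))\<^sup>2) = sqrt (1 / wt s k * (wt s k * (norm (c k))\<^sup>2))"
      by (rule real_sqrt_mult[symmetric])
    also have "\<dots> = norm (c k)" using w by simp
    finally show "norm (c k) = sqrt (1 / wt s k) * sqrt (wt s k * (norm (c k))\<^sup>2)" by simp
  qed
  also have "\<dots> \<le> sqrt ((\<Sum>k\<in>S. 1 / wt s k) * (\<Sum>k\<in>S. wt s k * (norm (c k))\<^sup>2))"
  proof (rule real_le_rsqrt)
    have "(\<Sum>k\<in>S. sqrt (1 / wt s k) * sqrt (wt s k * (norm (c k))\<^sup>2))\<^sup>2
        \<le> (\<Sum>k\<in>S. (sqrt (1 / wt s k))\<^sup>2) * (\<Sum>k\<in>S. (sqrt (wt s k * (norm (c k))\<^sup>2))\<^sup>2)"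
      by (rule Cauchy_Schwarz_ineq_sum)
    also have "\<dots> = (\<Sum>k\<in>S. 1 / wt s k) * (\<Sum>k\<in>S. wt s k * (norm (c k))\<^sup>2)"
      by (simp add: wt_pos less_imp_le)
    finally show "(\<Sum>k\<in>S. sqrt (1 / wt s k) * sqrt (wt s k * (norm (c k))\<^sup>2))\<^sup>2
        \<le> (\<Sum>k\<in>S. 1 / wt s k) * (\<Sum>k\<in>S. wt s k * (norm (c k))\<^sup>2)" .
  qed
  also have "\<dots> \<le> sqrt (4^m * A\<^sup>2)"
    using invsum cA by (intro real_sqrt_le_mono mult_mono) (auto intro!: sum_nonneg simp: wt_pos less_imp_le)
  also have "\<dots> = A * 2^m"
  proof -
    have e1: "((2::real)^m)^2 = 2^(m*2)" by (rule power_mult[symmetric])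
    have e2: "(4::real)^m = 2^(2*m)" by (simp add: power_mult)
    have "(4::real)^m * A\<^sup>2 = (A * 2^m)\<^sup>2"
      by (simp only: power_mult_distrib e1 e2 mult.commute)
    then show ?thesis using A by simp
  qed
  finally show ?thesis .
qed

lemma tp_split: "finite T \<Longrightarrow> S \<subseteq> T \<Longrightarrow> tp c T x = tp c S x + tp c (T - S) x"
  unfolding tp_def by (simp add: sum.subset_diff[of S T] add.commute)

lemma pointwise_bound:
  fixes p A z Bd :: real and lam :: "nat \<Rightarrow> real" and H L :: "nat \<Rightarrow> real"
  assumes p: "p > 2" and A: "A > 0"
    and lam: "\<And>m. lam m = 2 * A * 2^m"
    and zB: "z \<le> Bd" and Mt: "Bd < lam Mt" and z0: "0 \<le> z"
    and HL: "\<And>m. z \<le> L m + H m" and L: "\<And>m. L m \<le> A * 2^m" and H0: "\<And>m. 0 \<le> H m"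
  shows "z powr p \<le> (2*A) powr p + (\<Sum>m<Mt. 4 * 2 powr p * lam m powr (p-2) * (H m)\<^sup>2)"
proof (cases "z \<le> 2*A")
  case True
  have "z powr p \<le> (2*A) powr p" using True z0 p by (intro powr_mono2) auto
  moreover have "0 \<le> (\<Sum>m<Mt. 4 * 2 powr p * lam m powr (p-2) * (H m)\<^sup>2)"
    by (intro sum_nonneg) auto
  ultimately show ?thesis by linarith
next
  case False
  define J where "J = {m. m < Mt \<and> lam m \<le> z}"
  have finJ: "finite J" unfolding J_def by auto
  have Mt0: "Mt \<noteq> 0"
  proof
    assume "Mt = 0"
    then have "Bd < 2 * A" using Mt lam[of 0] by simp
    then show False using False zB by simp
  qed
  have "0 \<in> J" unfolding J_def using Mt0 False lam[of 0] by simp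
  then have Jne: "J \<noteq> {}" by auto
  define m where "m = Max J"
  have mJ: "m \<in> J" unfolding m_def using finJ Jne by (rule Max_in)
  then have mMt: "m < Mt" and lz: "lam m \<le> z" unfolding J_def by auto
  have lam_pos: "lam m > 0" using lam[of m] A by simp
  have zlt: "z < 2 * lam m"
  proof (cases "Suc m < Mt")
    case True
    have "Suc m \<notin> J"
    proof
      assume "Suc m \<in> J"
      then have "Suc m \<le> m" unfolding m_def using finJ by (simp add: Max_ge)
      then show False by simp
    qed
    then have "z < lam (Suc m)" using True unfolding J_def by auto
    then show ?thesis using lam[of m] lam[of "Suc m"] by simp
  next
    case False
    then have "Suc m = Mt" using mMt by simp
    then have "z < lam (Suc m)" using zB Mt by simp
    then show ?thesis using lam[of m] lam[of "Suc m"] by simp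
  qed
  have Hb: "lam m / 2 \<le> H m"
    using HL[of m] L[of m] lz lam[of m] by simp
  have "z powr p \<le> (2 * lam m) powr p" using zlt z0 p by (intro powr_mono2) auto
  also have "\<dots> = 2 powr p * lam m powr p" using lam_pos by (simp add: powr_mult)
  also have "lam m powr p = lam m powr (p-2) * (lam m)\<^sup>2"
  proof -
    have "lam m powr p = lam m powr ((p-2) + 2)" by simp
    also have "\<dots> = lam m powr (p-2) * lam m powr 2" by (rule powr_add)
    also have "lam m powr 2 = (lam m)\<^sup>2" using lam_pos by (simp add: powr_numeral)
    finally show ?thesis .
  qed
  also have "2 powr p * (lam m powr (p-2) * (lam m)\<^sup>2) = 4 * 2 powr p * lam m powr (p-2) * (lam m / 2)\<^sup>2"
    by (simp add: power_divide)
  also have "\<dots> \<le> 4 * 2 powr p * lam m powr (p-2) * (H m)\<^sup>2"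
    using Hb lam_pos by (intro mult_left_mono power_mono) auto
  also have "\<dots> \<le> (\<Sum>m<Mt. 4 * 2 powr p * lam m powr (p-2) * (H m)\<^sup>2)"
    using mMt by (intro member_le_sum) auto
  also have "\<dots> \<le> (2*A) powr p + (\<Sum>m<Mt. 4 * 2 powr p * lam m powr (p-2) * (H m)\<^sup>2)" by simp
  finally show ?thesis .
qed

lemma tp_Lp:
  fixes p s A :: real and c :: "int \<Rightarrow> complex" and T :: "int set"
  assumes p: "p > 2" and ps: "1/p + s = 1/2" and T: "finite T" and A: "A > 0"
    and cA: "(\<Sum>k\<in>T. wt s k * (norm (c k))\<^sup>2) \<le> A\<^sup>2"
  shows "integral {0..2*pi} (\<lambda>x. norm (tp c T x) powr p)
    \<le> 2*pi*((2*A) powr p + 4 * 2 powr p * (2*A) powr (p-2) * (p/(p-2)) * (2*p) powr ((p-2)/2) * A\<^sup>2)"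
proof -
  define lam where "lam m = 2*A*2^m" for m :: nat
  define S where "S m = {k\<in>T. 1 + p * real_of_int \<bar>k\<bar> powr (2/p) \<le> 4^m}" for m :: nat
  define Bd where "Bd = (\<Sum>k\<in>T. norm (c k))"
  obtain Mt where Mt: "Bd / (2*A) < 2^Mt" using real_arch_pow[of 2 "Bd/(2*A)"] by auto
  then have Mt': "Bd < lam Mt" using A by (simp add: lam_def divide_less_eq mult.commute)
  have SsubT: "S m \<subseteq> T" for m unfolding S_def by auto
  have finS: "finite (S m)" for m using SsubT T by (rule finite_subset)
  have Lb: "norm (tp c (S m) x) \<le> A * 2^m" for m x
  proof (rule L_bound[OF p ps finS[of m] A])
    have "(\<Sum>k\<in>S m. wt s k * (norm (c k))\<^sup>2) \<le> (\<Sum>k\<in>T. wt s k * (norm (c k))\<^sup>2)"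
      by (rule sum_mono2[OF T SsubT]) (simp add: wt_pos less_imp_le)
    then show "(\<Sum>k\<in>S m. wt s k * (norm (c k))\<^sup>2) \<le> A\<^sup>2" using cA by linarith
    show "\<And>k. k \<in> S m \<Longrightarrow> 1 + p * real_of_int \<bar>k\<bar> powr (2/p) \<le> 4^m"
      unfolding S_def by auto
  qed
  define K where "K m = 4 * 2 powr p * lam m powr (p-2)" for m
  have pw: "norm (tp c T x) powr p \<le> (2*A) powr p + (\<Sum>m<Mt. K m * (norm (tp c (T - S m) x))\<^sup>2)" for x
    unfolding K_def
  proof (rule pointwise_bound[OF p A lam_def _ Mt'])
    show "norm (tp c T x) \<le> Bd" unfolding Bd_def by (rule norm_tp_le)
    show "0 \<le> norm (tp c T x)" by simp
    show "norm (tp c T x) \<le> norm (tp c (S m) x) + norm (tp c (T - S m) x)" for m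
      using tp_split[OF T SsubT[of m], of c x] norm_triangle_ineq by simp
    show "norm (tp c (S m) x) \<le> A * 2^m" for m by (rule Lb)
    show "0 \<le> norm (tp c (T - S m) x)" for m by simp
  qed
  have int1: "((\<lambda>x. norm (tp c T x) powr p) has_integral integral {0..2*pi} (\<lambda>x. norm (tp c T x) powr p)) {0..2*pi}"
  proof (rule integrable_integral, rule integrable_continuous_interval)
    show "continuous_on {0..2*pi} (\<lambda>x. norm (tp c T x) powr p)"
      using p by (intro continuous_on_powr' continuous_intros) auto
  qed
  have int2: "((\<lambda>x. (2*A) powr p + (\<Sum>m<Mt. K m * (norm (tp c (T - S m) x))\<^sup>2)) has_integral
      (2*pi*(2*A) powr p + (\<Sum>m<Mt. K m * (2 * pi * (\<Sum>k\<in>T - S m. (norm (c k))\<^sup>2))))) {0..2*pi}"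
  proof (rule has_integral_add)
    show "((\<lambda>x. (2*A) powr p) has_integral 2*pi*(2*A) powr p) {0..2*pi}"
      using has_integral_const_real[of "(2*A) powr p" 0 "2*pi"] by simp
    show "((\<lambda>x. \<Sum>m<Mt. K m * (norm (tp c (T - S m) x))\<^sup>2) has_integral
        (\<Sum>m<Mt. K m * (2 * pi * (\<Sum>k\<in>T - S m. (norm (c k))\<^sup>2)))) {0..2*pi}"
      using T by (intro has_integral_sum has_integral_mult_right tp_orth) auto
  qed
  have le1: "integral {0..2*pi} (\<lambda>x. norm (tp c T x) powr p)
      \<le> 2*pi*(2*A) powr p + (\<Sum>m<Mt. K m * (2 * pi * (\<Sum>k\<in>T - S m. (norm (c k))\<^sup>2)))"
    by (rule has_integral_le[OF int1 int2]) (rule pw)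
  define C0 where "C0 = 4 * 2 powr p * (2*A) powr (p-2)"
  have Kfac: "K m = C0 * (2^m) powr (p-2)" for m
    unfolding K_def C0_def lam_def using A by (simp add: powr_mult)
  have sw: "(\<Sum>m<Mt. K m * (2 * pi * (\<Sum>k\<in>T - S m. (norm (c k))\<^sup>2)))
      = 2 * pi * (\<Sum>k\<in>T. (norm (c k))\<^sup>2 * (\<Sum>m\<in>{m\<in>{..<Mt}. k \<notin> S m}. K m))"
  proof -
    have "(\<Sum>m<Mt. K m * (2 * pi * (\<Sum>k\<in>T - S m. (norm (c k))\<^sup>2)))
        = (\<Sum>m<Mt. \<Sum>k\<in>T. 2 * pi * (if k \<notin> S m then (norm (c k))\<^sup>2 * K m else 0))"
    proof (rule sum.cong[OF refl])
      fix m
      have "T - S m = {k\<in>T. k \<notin> S m}" by auto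
      then have "(\<Sum>k\<in>T - S m. (norm (c k))\<^sup>2) = (\<Sum>k\<in>T. if k \<notin> S m then (norm (c k))\<^sup>2 else 0)"
        using T by (simp add: sum.inter_filter)
      then show "K m * (2 * pi * (\<Sum>k\<in>T - S m. (norm (c k))\<^sup>2))
          = (\<Sum>k\<in>T. 2 * pi * (if k \<notin> S m then (norm (c k))\<^sup>2 * K m else 0))"
        by (simp add: sum_distrib_left if_distrib mult_ac cong: if_cong)
    qed
    also have "\<dots> = (\<Sum>k\<in>T. \<Sum>m<Mt. 2 * pi * (if k \<notin> S m then (norm (c k))\<^sup>2 * K m else 0))"
      by (rule sum.swap)
    also have "\<dots> = 2 * pi * (\<Sum>k\<in>T. (norm (c k))\<^sup>2 * (\<Sum>m\<in>{m\<in>{..<Mt}. k \<notin> S m}. K m))"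
    proof -
      have "(\<Sum>m<Mt. 2 * pi * (if k \<notin> S m then (norm (c k))\<^sup>2 * K m else 0))
          = 2 * pi * ((norm (c k))\<^sup>2 * (\<Sum>m\<in>{m\<in>{..<Mt}. k \<notin> S m}. K m))" for k
      proof -
        have e: "(\<Sum>m\<in>{m\<in>{..<Mt}. k \<notin> S m}. K m) = (\<Sum>m<Mt. if k \<notin> S m then K m else 0)"
          by (rule sum.inter_filter) simp
        show ?thesis unfolding e by (simp add: sum_distrib_left if_distrib mult_ac cong: if_cong)
      qed
      then show ?thesis by (simp add: sum_distrib_left)
    qed
    finally show ?thesis .
  qed
  have perk: "(\<Sum>m\<in>{m\<in>{..<Mt}. k \<notin> S m}. K m) \<le> C0 * ((p/(p-2)) * (2*p) powr ((p-2)/2) * wt s k)"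
    if kT: "k \<in> T" for k
  proof -
    define D where "D = 1 + p * real_of_int \<bar>k\<bar> powr (2/p)"
    have e: "(\<Sum>m\<in>{m\<in>{..<Mt}. k \<notin> S m}. K m) = C0 * (\<Sum>m\<in>{m\<in>{..<Mt}. k \<notin> S m}. ((2::real)^m) powr (p-2))"
      by (simp add: Kfac sum_distrib_left)
    have "(\<Sum>m\<in>{m\<in>{..<Mt}. k \<notin> S m}. ((2::real)^m) powr (p-2)) \<le> (p/(p-2)) * D powr ((p-2)/2)"
    proof (rule geo_k[OF p])
      show "finite {m\<in>{..<Mt}. k \<notin> S m}" by auto
      show "4^m < D" if "m \<in> {m\<in>{..<Mt}. k \<notin> S m}" for m
        using that kT unfolding S_def D_def by auto
    qed
    also have "\<dots> \<le> (p/(p-2)) * ((2*p) powr ((p-2)/2) * wt s k)"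
      unfolding D_def using p by (intro mult_left_mono Dk_bound[OF p ps]) auto
    finally have b: "(\<Sum>m\<in>{m\<in>{..<Mt}. k \<notin> S m}. ((2::real)^m) powr (p-2)) \<le> (p/(p-2)) * ((2*p) powr ((p-2)/2) * wt s k)" .
    have C0: "C0 \<ge> 0" unfolding C0_def by simp
    show ?thesis unfolding e using mult_left_mono[OF b C0] by (simp add: mult_ac)
  qed
  have "(\<Sum>k\<in>T. (norm (c k))\<^sup>2 * (\<Sum>m\<in>{m\<in>{..<Mt}. k \<notin> S m}. K m))
      \<le> (\<Sum>k\<in>T. (norm (c k))\<^sup>2 * (C0 * ((p/(p-2)) * (2*p) powr ((p-2)/2) * wt s k)))"
    using perk by (intro sum_mono mult_left_mono) auto
  also have "\<dots> = C0 * (p/(p-2)) * (2*p) powr ((p-2)/2) * (\<Sum>k\<in>T. wt s k * (norm (c k))\<^sup>2)"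
  proof -
    define Q where "Q = C0 * (p/(p-2)) * (2*p) powr ((p-2)/2)"
    have "(norm (c k))\<^sup>2 * (C0 * ((p/(p-2)) * (2*p) powr ((p-2)/2) * wt s k)) = Q * (wt s k * (norm (c k))\<^sup>2)" for k
      unfolding Q_def by (simp only: mult_ac)
    then show ?thesis unfolding Q_def[symmetric] by (simp add: sum_distrib_left)
  qed
  also have "\<dots> \<le> C0 * (p/(p-2)) * (2*p) powr ((p-2)/2) * A\<^sup>2"
    using cA p A by (intro mult_left_mono) (auto simp: C0_def)
  finally have sumb: "(\<Sum>k\<in>T. (norm (c k))\<^sup>2 * (\<Sum>m\<in>{m\<in>{..<Mt}. k \<notin> S m}. K m))
      \<le> C0 * (p/(p-2)) * (2*p) powr ((p-2)/2) * A\<^sup>2" .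
  have "integral {0..2*pi} (\<lambda>x. norm (tp c T x) powr p)
      \<le> 2*pi*(2*A) powr p + 2 * pi * (C0 * (p/(p-2)) * (2*p) powr ((p-2)/2) * A\<^sup>2)"
  proof -
    have "2 * pi * (\<Sum>k\<in>T. (norm (c k))\<^sup>2 * (\<Sum>m\<in>{m\<in>{..<Mt}. k \<notin> S m}. K m))
        \<le> 2 * pi * (C0 * (p/(p-2)) * (2*p) powr ((p-2)/2) * A\<^sup>2)"
      using sumb by (intro mult_left_mono) auto
    then show ?thesis using le1 sw by linarith
  qed
  then show ?thesis by (simp add: C0_def algebra_simps)
qed

definition TN :: "nat \<Rightarrow> int set" where "TN N = {- int N..int N}"

definition bK :: "nat \<Rightarrow> int \<Rightarrow> real" where
  "bK N k = real ((2*N) choose nat (k + int N)) / real ((2*N) choose N)"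

definition Kr :: "nat \<Rightarrow> real \<Rightarrow> real" where
  "Kr N u = (cos (u/2))^(2*N) * 4^N / real ((2*N) choose N)"

lemma finite_TN [simp]: "finite (TN N)" by (simp add: TN_def)

lemma central_pos: "real ((2*N) choose N) > 0" by simp

lemma bK_nonneg: "bK N k \<ge> 0" by (simp add: bK_def)

lemma bK_le1: "bK N k \<le> 1"
  unfolding bK_def using binomial_maximum'[of N "nat (k + int N)"] central_pos[of N]
  by (simp add: divide_le_eq_1 del: of_nat_le_iff)

lemma bK_0 [simp]: "bK N 0 = 1"
  unfolding bK_def by simp

lemma bK_sym: "k \<in> TN N \<Longrightarrow> bK N (- k) = bK N k"
proof -
  assume k: "k \<in> TN N"
  then have "nat (- k + int N) = 2 * N - nat (k + int N)" "nat (k + int N) \<le> 2 * N"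
    unfolding TN_def by auto
  then show ?thesis unfolding bK_def using binomial_symmetric[of "nat (k + int N)" "2*N"] by simp
qed

lemma TN_uminus: "k \<in> TN N \<Longrightarrow> - k \<in> TN N" unfolding TN_def by auto

lemma sum_odd_TN:
  fixes g :: "int \<Rightarrow> 'a::real_vector"
  assumes "\<And>k. k \<in> TN N \<Longrightarrow> g (- k) = - g k"
  shows "(\<Sum>k\<in>TN N. g k) = 0"
proof -
  have "(\<Sum>k\<in>TN N. g k) = (\<Sum>k\<in>TN N. g (- k))"
    by (rule sum.reindex_bij_witness[of _ uminus uminus]) (auto simp: TN_uminus)
  also have "\<dots> = - (\<Sum>k\<in>TN N. g k)" using assms by (simp add: sum_negf)
  finally have eq: "(\<Sum>k\<in>TN N. g k) = - (\<Sum>k\<in>TN N. g k)" .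
  define S where "S = (\<Sum>k\<in>TN N. g k)"
  have eq': "S = - S" using eq unfolding S_def .
  have "(2::real) *\<^sub>R S = S + S" by (rule scaleR_2)
  also have "\<dots> = S + - S" using eq' by (rule arg_cong)
  also have "\<dots> = 0" by simp
  finally show ?thesis unfolding S_def by simp
qed

lemma Kr_nonneg: "Kr N u \<ge> 0"
  unfolding Kr_def by (simp add: power_mult)

lemma four_pow_le: "(4::real)^N \<le> real (2*N+1) * real ((2*N) choose N)"
proof -
  have "(4::real)^N = real (\<Sum>j\<le>2*N. (2*N) choose j)"
    by (simp add: choose_row_sum power_mult)
  also have "\<dots> \<le> real (\<Sum>j\<le>2*N. (2*N) choose N)"
    by (intro of_nat_mono sum_mono binomial_maximum')
  also have "\<dots> = real (2*N+1) * real ((2*N) choose N)" by (simp add: algebra_simps)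
  finally show ?thesis .
qed

lemma Kr_le: "Kr N u \<le> real (2*N+1) * ((cos (u/2))\<^sup>2)^N"
proof -
  have "Kr N u = ((cos (u/2))\<^sup>2)^N * (4^N / real ((2*N) choose N))"
    unfolding Kr_def by (simp add: power_mult)
  also have "\<dots> \<le> ((cos (u/2))\<^sup>2)^N * real (2*N+1)"
    using four_pow_le[of N] central_pos[of N]
    by (intro mult_left_mono) (auto simp: divide_le_eq)
  finally show ?thesis by (simp add: mult.commute)
qed

lemma kernel_identity:
  "(\<Sum>k\<in>TN N. complex_of_real (bK N k) * E k u) = complex_of_real (Kr N u)"
proof -
  define z where "z = exp (\<i> * of_real (u/2))"
  define w where "w = exp (- (\<i> * of_real (u/2)))"
  have cosz: "complex_of_real (2 * cos (u/2)) = z + w"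
  proof -
    have "complex_of_real (2 * cos (u/2)) = 2 * cos (complex_of_real (u/2))"
      by (simp only: of_real_mult cos_of_real) simp
    also have "\<dots> = z + w" unfolding z_def w_def cos_exp_eq by simp
    finally show ?thesis .
  qed
  have zw: "z^j * w^(2*N - j) = E (int j - int N) u" if "j \<le> 2*N" for j
  proof -
    have "z^j * w^(2*N - j) = exp (of_nat j * (\<i> * of_real (u/2))) * exp (of_nat (2*N - j) * (- (\<i> * of_real (u/2))))"
      unfolding z_def w_def by (simp only: exp_of_nat_mult[symmetric])
    also have "\<dots> = exp (of_nat j * (\<i> * of_real (u/2)) + of_nat (2*N - j) * (- (\<i> * of_real (u/2))))"
      by (rule exp_add[symmetric])
    also have "of_nat j * (\<i> * of_real (u/2)) + of_nat (2*N - j) * (- (\<i> * of_real (u/2)))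
        = \<i> * of_int (int j - int N) * of_real u"
      using that by (simp add: of_nat_diff algebra_simps)
    finally show ?thesis unfolding E_def .
  qed
  have "complex_of_real ((2 * cos (u/2))^(2*N)) = (z + w)^(2*N)"
    by (simp flip: cosz)
  also have "\<dots> = (\<Sum>j\<le>2*N. of_nat ((2*N) choose j) * z^j * w^(2*N - j))"
    by (rule binomial_ring)
  also have "\<dots> = (\<Sum>j\<le>2*N. of_nat ((2*N) choose j) * E (int j - int N) u)"
    by (rule sum.cong) (auto simp: zw mult.assoc)
  also have "\<dots> = (\<Sum>k\<in>TN N. of_nat ((2*N) choose nat (k + int N)) * E k u)"
    by (rule sum.reindex_bij_witness[of _ "\<lambda>k. nat (k + int N)" "\<lambda>j. int j - int N"])
       (auto simp: TN_def)
  finally have eq: "complex_of_real ((2 * cos (u/2))^(2*N)) = (\<Sum>k\<in>TN N. of_nat ((2*N) choose nat (k + int N)) * E k u)" .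
  have "(\<Sum>k\<in>TN N. complex_of_real (bK N k) * E k u)
      = (\<Sum>k\<in>TN N. of_nat ((2*N) choose nat (k + int N)) * E k u) / of_nat ((2*N) choose N)"
    unfolding bK_def by (simp add: sum_divide_distrib)
  also have "\<dots> = complex_of_real ((2 * cos (u/2))^(2*N)) / of_nat ((2*N) choose N)"
    by (simp only: eq)
  also have "\<dots> = complex_of_real (Kr N u)"
    unfolding Kr_def by (simp add: power_mult_distrib power_mult)
  finally show ?thesis .
qed

definition psi :: "int \<Rightarrow> real \<Rightarrow> complex" where
  "psi k u = (if k = 0 then of_real u else (E k u - 1) / (\<i> * of_int k))"

definition rp :: "int \<Rightarrow> real \<Rightarrow> real" where
  "rp k u = (if k = 0 then u else sin (of_int k * u) / of_int k)"

definition Phi :: "nat \<Rightarrow> real \<Rightarrow> real" where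
  "Phi N u = (\<Sum>k\<in>TN N. bK N k * rp k u)"

definition Psi :: "nat \<Rightarrow> real \<Rightarrow> complex" where
  "Psi N u = (\<Sum>k\<in>TN N. of_real (bK N k) * psi k u)"

lemma Re_E: "Re (E k u) = cos (of_int k * u)" and Im_E: "Im (E k u) = sin (of_int k * u)"
  unfolding E_def by (simp_all add: Re_exp Im_exp)

lemma Re_psi: "Re (psi k u) = rp k u"
  unfolding psi_def rp_def by (auto simp: Re_divide Re_E Im_E power2_eq_square)

lemma Im_psi: "Im (psi k u) = (if k = 0 then 0 else (1 - cos (of_int k * u)) / of_int k)"
  unfolding psi_def by (auto simp: Im_divide Re_E Im_E power2_eq_square divide_simps)

lemma Psi_real: "Psi N u = of_real (Phi N u)"
proof (rule complex_eqI)
  show "Re (Psi N u) = Re (complex_of_real (Phi N u))"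
    unfolding Psi_def Phi_def by (simp add: Re_sum Re_psi)
  have "Im (Psi N u) = (\<Sum>k\<in>TN N. bK N k * Im (psi k u))"
    unfolding Psi_def by (simp add: Im_sum)
  also have "\<dots> = 0"
    by (rule sum_odd_TN) (auto simp: Im_psi bK_sym TN_uminus)
  finally show "Im (Psi N u) = Im (complex_of_real (Phi N u))" by simp
qed

lemma psi_shift: "psi k (v + h) - psi k v = E k v * psi k h"
proof (cases "k = 0")
  case True
  then show ?thesis unfolding psi_def by simp
next
  case False
  then have "\<i> * of_int k \<noteq> 0" by simp
  with False show ?thesis unfolding psi_def by (simp add: E_add field_simps)
qed

lemma Psi_shift: "Psi N (v + h) - Psi N v = (\<Sum>k\<in>TN N. of_real (bK N k) * E k v * psi k h)"
  unfolding Psi_def by (simp add: sum_subtractf[symmetric] right_diff_distrib[symmetric] psi_shift mult.assoc)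

lemma rp_deriv: "DERIV (rp k) u :> cos (of_int k * u)"
proof (cases "k = 0")
  case True
  then show ?thesis unfolding rp_def[abs_def] by (auto intro!: derivative_eq_intros)
next
  case False
  then show ?thesis unfolding rp_def[abs_def] by (auto intro!: derivative_eq_intros)
qed

lemma Phi_deriv: "DERIV (Phi N) u :> Kr N u"
proof -
  have "DERIV (\<lambda>u. \<Sum>k\<in>TN N. bK N k * rp k u) u :> (\<Sum>k\<in>TN N. bK N k * cos (of_int k * u))"
    by (intro DERIV_sum DERIV_cmult rp_deriv)
  moreover have "(\<Sum>k\<in>TN N. bK N k * cos (of_int k * u)) = Kr N u"
  proof -
    have "Re (\<Sum>k\<in>TN N. complex_of_real (bK N k) * E k u) = Re (complex_of_real (Kr N u))"
      by (simp only: kernel_identity)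
    then show ?thesis by (simp add: Re_sum Re_E)
  qed
  ultimately show ?thesis unfolding Phi_def[abs_def] by simp
qed

lemma rp_0 [simp]: "rp k 0 = 0" by (simp add: rp_def)

lemma Phi_0 [simp]: "Phi N 0 = 0"
  unfolding Phi_def by simp

lemma sin_shift_int: "sin (x + 2 * pi * of_int j) = sin x"
  by (simp add: sin_add)

lemma rp_shift: "rp k (u + 2 * pi * of_int j) = rp k u + (if k = 0 then 2 * pi * of_int j else 0)"
proof -
  have e: "of_int k * (u + 2 * pi * of_int j) = of_int k * u + 2 * pi * of_int (k * j)"
    by (simp add: algebra_simps)
  have "sin (of_int k * (u + 2 * pi * of_int j)) = sin (of_int k * u)"
    unfolding e by (rule sin_shift_int)
  then show ?thesis unfolding rp_def by simp
qed

lemma zero_TN: "0 \<in> TN N" unfolding TN_def by simp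

lemma Phi_shift: "Phi N (u + 2 * pi * of_int j) = Phi N u + 2 * pi * of_int j"
proof -
  have "Phi N (u + 2 * pi * of_int j) = (\<Sum>k\<in>TN N. bK N k * rp k u + (if k = 0 then 2 * pi * of_int j else 0))"
    unfolding Phi_def by (rule sum.cong) (auto simp: rp_shift)
  also have "\<dots> = Phi N u + 2 * pi * of_int j"
    unfolding Phi_def by (simp add: sum.distrib zero_TN)
  finally show ?thesis .
qed

lemma rp_odd: "rp k (- u) = - rp k u"
  unfolding rp_def by simp

lemma Phi_odd: "Phi N (- u) = - Phi N u"
  unfolding Phi_def by (simp add: rp_odd sum_negf)

lemma Phi_pi: "Phi N pi = pi"
proof -
  have "Phi N pi = Phi N (- pi + 2 * pi * of_int 1)" by simp
  also have "\<dots> = Phi N (- pi) + 2 * pi * of_int 1" by (rule Phi_shift)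
  also have "\<dots> = - Phi N pi + 2 * pi" by (simp add: Phi_odd)
  finally show ?thesis by simp
qed

lemma Phi_mono: "u \<le> v \<Longrightarrow> Phi N u \<le> Phi N v"
  by (rule DERIV_nonneg_imp_nondecreasing[of u v]) (use Phi_deriv Kr_nonneg in blast)+

lemma Phi_incr_bound: "0 \<le> h \<Longrightarrow> h \<le> 2 * pi \<Longrightarrow> 0 \<le> Phi N (v + h) - Phi N v \<and> Phi N (v + h) - Phi N v \<le> 2 * pi"
proof -
  assume h: "0 \<le> h" "h \<le> 2 * pi"
  have "Phi N v \<le> Phi N (v + h)" using h by (intro Phi_mono) simp
  moreover have "Phi N (v + h) \<le> Phi N (v + 2 * pi * of_int 1)" using h by (intro Phi_mono) simp
  moreover have "Phi N (v + 2 * pi * of_int 1) = Phi N v + 2 * pi * of_int 1" by (rule Phi_shift)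
  ultimately show ?thesis by simp
qed

lemma cos_half_sq_le:
  assumes "0 < d" "d \<le> pi" "d \<le> z" "z \<le> 2*pi - d"
  shows "(cos (z/2))\<^sup>2 \<le> (cos (d/2))\<^sup>2"
proof -
  have c1: "cos (z/2) \<le> cos (d/2)" using assms by (intro cos_monotone_0_pi_le) auto
  have "cos (pi - z/2) \<le> cos (d/2)" using assms by (intro cos_monotone_0_pi_le) auto
  then have c2: "- cos (z/2) \<le> cos (d/2)" by simp
  have "\<bar>cos (z/2)\<bar> \<le> cos (d/2)" using c1 c2 by linarith
  then have "\<bar>cos (z/2)\<bar>\<^sup>2 \<le> (cos (d/2))\<^sup>2" by (intro power_mono) auto
  then show ?thesis by simp
qed

lemma Phi_conc:
  assumes d: "0 < d" "d \<le> pi" and u: "d \<le> u" "u \<le> 2*pi - d"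
  shows "\<bar>Phi N u - pi\<bar> \<le> pi * (real (2*N+1) * ((cos (d/2))\<^sup>2)^N)"
proof -
  have Kb: "Kr N z \<le> real (2*N+1) * ((cos (d/2))\<^sup>2)^N" if "d \<le> z" "z \<le> 2*pi - d" for z
  proof -
    have "Kr N z \<le> real (2*N+1) * ((cos (z/2))\<^sup>2)^N" by (rule Kr_le)
    also have "\<dots> \<le> real (2*N+1) * ((cos (d/2))\<^sup>2)^N"
      by (rule mult_left_mono[OF power_mono[OF cos_half_sq_le[OF d that]]]) auto
    finally show ?thesis .
  qed
  consider "u = pi" | "u < pi" | "u > pi" by linarith
  then show ?thesis
  proof cases
    case 1
    then show ?thesis by (simp add: Phi_pi)
  next
    case 2
    obtain z where z: "u < z" "z < pi" and eq: "Phi N pi - Phi N u = (pi - u) * Kr N z"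
      using MVT2[OF 2, of "Phi N" "Kr N"] Phi_deriv by blast
    have nn: "0 \<le> (pi - u) * Kr N z" using 2 Kr_nonneg[of N z] by simp
    have "Phi N u - pi = - ((pi - u) * Kr N z)" using eq by (simp add: Phi_pi)
    then have "\<bar>Phi N u - pi\<bar> = (pi - u) * Kr N z" using nn by simp
    also have "\<dots> \<le> pi * (real (2*N+1) * ((cos (d/2))\<^sup>2)^N)"
      using Kb[of z] z u d Kr_nonneg[of N z] by (intro mult_mono) auto
    finally show ?thesis .
  next
    case 3
    obtain z where z: "pi < z" "z < u" and eq: "Phi N u - Phi N pi = (u - pi) * Kr N z"
      using MVT2[OF 3, of "Phi N" "Kr N"] Phi_deriv by blast
    have nn: "0 \<le> (u - pi) * Kr N z" using 3 Kr_nonneg[of N z] by simp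
    have "Phi N u - pi = (u - pi) * Kr N z" using eq by (simp add: Phi_pi)
    then have "\<bar>Phi N u - pi\<bar> = (u - pi) * Kr N z" using nn by simp
    also have "\<dots> \<le> pi * (real (2*N+1) * ((cos (d/2))\<^sup>2)^N)"
      using Kb[of z] z u d Kr_nonneg[of N z] by (intro mult_mono) auto
    finally show ?thesis .
  qed
qed

lemma lin_pow_lim:
  fixes q :: real assumes "0 \<le> q" "q < 1"
  shows "(\<lambda>N. real (2*N+1) * q^N) \<longlonglongrightarrow> 0"
proof -
  have a: "(\<lambda>N. real N * q^N) \<longlonglongrightarrow> 0" using powser_times_n_limit_0[of q] assms by simp
  have b: "(\<lambda>N. q^N) \<longlonglongrightarrow> 0" using assms by (intro LIMSEQ_power_zero) simp
  have "(\<lambda>N. 2 * (real N * q^N) + q^N) \<longlonglongrightarrow> 2 * 0 + 0"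
    by (intro tendsto_intros a b)
  then show ?thesis by (simp add: algebra_simps)
qed

lemma Phi_lim:
  assumes u: "\<And>j::int. u \<noteq> 2 * pi * of_int j"
  shows "(\<lambda>N. Phi N u) \<longlonglongrightarrow> 2 * pi * of_int \<lfloor>u / (2*pi)\<rfloor> + pi"
proof -
  define j where "j = \<lfloor>u / (2*pi)\<rfloor>"
  define v where "v = u - 2 * pi * of_int j"
  have "of_int j \<le> u / (2*pi)" "u / (2*pi) < of_int j + 1" unfolding j_def by linarith+
  then have v1: "0 \<le> v" "v < 2 * pi" unfolding v_def by (auto simp: field_simps)
  have "v \<noteq> 0" using u[of j] unfolding v_def by auto
  with v1 have v2: "0 < v" by simp
  define d where "d = min v (2*pi - v)"
  have d: "0 < d" "d \<le> pi" "d \<le> v" "v \<le> 2*pi - d" using v1 v2 by (auto simp: d_def)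
  define q where "q = (cos (d/2))\<^sup>2"
  have q: "0 \<le> q" "q < 1"
  proof -
    show "0 \<le> q" unfolding q_def by simp
    have c0: "0 \<le> cos (d/2)" using d by (intro cos_ge_zero) auto
    have "cos (d/2) < cos 0" using d by (intro cos_monotone_0_pi) auto
    then have "cos (d/2) < 1" by simp
    then show "q < 1" unfolding q_def using c0 by (simp add: power_less_one_iff abs_square_less_1)
  qed
  have lim0: "(\<lambda>N. Phi N v - pi) \<longlonglongrightarrow> 0"
  proof (rule Lim_null_comparison)
    show "\<forall>\<^sub>F N in sequentially. norm (Phi N v - pi) \<le> pi * (real (2*N+1) * q^N)"
      using Phi_conc[OF d(1,2,3,4)] by (simp add: q_def)
    show "(\<lambda>N. pi * (real (2*N+1) * q^N)) \<longlonglongrightarrow> 0"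
      using tendsto_mult[OF tendsto_const[of pi] lin_pow_lim[OF q]] by simp
  qed
  have "(\<lambda>N. (Phi N v - pi) + (2 * pi * of_int j + pi)) \<longlonglongrightarrow> 0 + (2 * pi * of_int j + pi)"
    by (intro tendsto_intros lim0)
  moreover have "Phi N u = (Phi N v - pi) + (2 * pi * of_int j + pi)" for N
  proof -
    have "u = v + 2 * pi * of_int j" unfolding v_def by simp
    then have "Phi N u = Phi N v + 2 * pi * of_int j" using Phi_shift by simp
    then show ?thesis by simp
  qed
  ultimately show ?thesis unfolding j_def by simp
qed

lemma L2_imp_L1:
  assumes fm: "f \<in> borel_measurable lborel"
    and fin: "(\<integral>\<^sup>+ t. ennreal (indicator {0..2*pi} t * norm (f t :: complex) powr 2) \<partial>lborel) < \<infinity>"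
  shows "set_integrable lborel {0..2*pi} f"
  unfolding set_integrable_def
proof (rule integrableI_bounded)
  show "(\<lambda>x. indicator {0..2 * pi} x *\<^sub>R f x) \<in> borel_measurable lborel" using fm by measurable
  have "(\<integral>\<^sup>+ x. ennreal (norm (indicator {0..2 * pi} x *\<^sub>R f x)) \<partial>lborel)
      \<le> (\<integral>\<^sup>+ x. ennreal (indicator {0..2 * pi} x) + ennreal (indicator {0..2*pi} x * norm (f x) powr 2) \<partial>lborel)"
  proof (rule nn_integral_mono)
    fix x
    have "norm (f x) \<le> 1 + norm (f x) powr 2"
    proof (cases "norm (f x) \<le> 1")
      case True
      have "0 \<le> norm (f x) powr 2" by simp
      then show ?thesis using True by linarith
    next
      case False
      then have "1 * norm (f x) \<le> norm (f x) * norm (f x)" by (intro mult_right_mono) auto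
      then have "norm (f x) \<le> norm (f x) ^ 2" by (simp add: power2_eq_square)
      also have "\<dots> = norm (f x) powr 2" by (simp add: powr_numeral)
      finally show ?thesis by simp
    qed
    then have "norm (indicator {0..2 * pi} x *\<^sub>R f x) \<le> indicator {0..2 * pi} x + indicator {0..2*pi} x * norm (f x) powr 2"
      by (auto simp: indicator_def)
    then show "ennreal (norm (indicator {0..2 * pi} x *\<^sub>R f x)) \<le> ennreal (indicator {0..2 * pi} x) + ennreal (indicator {0..2*pi} x * norm (f x) powr 2)"
      by (simp add: ennreal_plus[symmetric] del: ennreal_plus)
  qed
  also have "\<dots> = (\<integral>\<^sup>+ x. ennreal (indicator {0..2 * pi} x) \<partial>lborel) + (\<integral>\<^sup>+ x. ennreal (indicator {0..2*pi} x * norm (f x) powr 2) \<partial>lborel)"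
    using fm by (intro nn_integral_add) auto
  also have "\<dots> < \<infinity>" using fin by (simp add: ennreal_indicator)
  finally show "(\<integral>\<^sup>+ x. ennreal (norm (indicator {0..2 * pi} x *\<^sub>R f x)) \<partial>lborel) < \<infinity>" .
qed

lemma set_integrable_mult_bounded:
  fixes f g :: "real \<Rightarrow> complex"
  assumes f: "set_integrable lborel A f" and g: "g \<in> borel_measurable lborel"
    and B: "\<And>s. norm (g s) \<le> B"
  shows "set_integrable lborel A (\<lambda>s. f s * g s)"
proof -
  have fi: "integrable lborel (\<lambda>s. indicator A s *\<^sub>R f s)" using f unfolding set_integrable_def .
  have int: "integrable lborel (\<lambda>s. of_real B * (indicator A s *\<^sub>R f s))"
    using fi by (rule integrable_mult_right)
  have meas: "(\<lambda>s. indicator A s *\<^sub>R (f s * g s)) \<in> borel_measurable lborel"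
  proof -
    have "(\<lambda>s. (indicator A s *\<^sub>R f s) * g s) \<in> borel_measurable lborel"
      using borel_measurable_integrable[OF fi] g by (rule borel_measurable_times)
    then show ?thesis by (simp add: mult_scaleR_left)
  qed
  have ae: "AE x in lborel. norm (indicator A x *\<^sub>R (f x * g x)) \<le> norm (of_real B * (indicator A x *\<^sub>R f x))"
  proof (rule AE_I2)
    fix x
    have B0: "0 \<le> B" using B[of x] norm_ge_zero order_trans by blast
    have "norm (indicator A x *\<^sub>R (f x * g x)) = indicator A x * norm (f x) * norm (g x)"
      by (simp add: norm_mult indicator_def)
    also have "\<dots> \<le> indicator A x * norm (f x) * B"
      using B[of x] by (intro mult_left_mono) (auto simp: indicator_def)
    also have "\<dots> = norm (of_real B * (indicator A x *\<^sub>R f x))"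
      using B0 by (simp add: norm_mult indicator_def)
    finally show "norm (indicator A x *\<^sub>R (f x * g x)) \<le> norm (of_real B * (indicator A x *\<^sub>R f x))" .
  qed
  show ?thesis unfolding set_integrable_def by (rule Bochner_Integration.integrable_bound[OF int meas ae])
qed

definition cQ :: "(real \<Rightarrow> complex) \<Rightarrow> nat \<Rightarrow> real \<Rightarrow> int \<Rightarrow> complex" where
  "cQ f N h k = of_real (bK N k) * (psi k h / of_real h) * fourier_coeff f k"

lemma set_integral_sum_fin:
  fixes F :: "'i \<Rightarrow> real \<Rightarrow> complex"
  assumes "finite I" "\<And>i. i \<in> I \<Longrightarrow> set_integrable lborel A (F i)"
  shows "(LINT s:A|lborel. \<Sum>i\<in>I. F i s) = (\<Sum>i\<in>I. LINT s:A|lborel. F i s)"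
  unfolding set_lebesgue_integral_def scaleR_sum_right
  by (rule Bochner_Integration.integral_sum) (use assms in \<open>auto simp: set_integrable_def\<close>)

lemma expm_meas: "(\<lambda>s. exp (- (\<i> * complex_of_int k * complex_of_real s))) \<in> borel_measurable lborel"
  by measurable

lemma Q_formula:
  assumes fi: "set_integrable lborel {0..2*pi} f"
  shows "tp (cQ f N h) (TN N) x
    = (1/(2*pi)) * (LINT s:{0..2*pi}|lborel. f s * ((Psi N (x - s + h) - Psi N (x - s)) / of_real h))"
proof -
  define e where "e k s = exp (- (\<i> * complex_of_int k * complex_of_real s))" for k s
  define C where "C k = of_real (bK N k) * (psi k h / of_real h) * E k x" for k
  have ie: "set_integrable lborel {0..2*pi} (\<lambda>s. f s * e k s)" for k
    unfolding e_def by (rule set_integrable_mult_bounded[OF fi expm_meas, of _ 1]) (simp add: norm_exp_eq_Re)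
  have ie2: "set_integrable lborel {0..2*pi} (\<lambda>s. C k * (f s * e k s))" for k
    using ie[of k] by (rule set_integrable_mult_right)
  have "tp (cQ f N h) (TN N) x = (\<Sum>k\<in>TN N. (1/(2*pi)) * (LINT s:{0..2*pi}|lborel. C k * (f s * e k s)))"
    unfolding tp_def
  proof (rule sum.cong[OF refl])
    fix k
    show "cQ f N h k * E k x = (1/(2*pi)) * (LINT s:{0..2*pi}|lborel. C k * (f s * e k s))"
      unfolding cQ_def fourier_coeff_def C_def e_def set_integral_mult_right by (simp add: mult_ac)
  qed
  also have "\<dots> = (1/(2*pi)) * (LINT s:{0..2*pi}|lborel. \<Sum>k\<in>TN N. C k * (f s * e k s))"
    by (simp add: set_integral_sum_fin ie2 sum_distrib_left)
  also have "(LINT s:{0..2*pi}|lborel. \<Sum>k\<in>TN N. C k * (f s * e k s))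
      = (LINT s:{0..2*pi}|lborel. f s * ((Psi N (x - s + h) - Psi N (x - s)) / of_real h))"
  proof (rule arg_cong[where f="\<lambda>g. LINT s:{0..2*pi}|lborel. g s"], rule ext)
    fix s
    have "(\<Sum>k\<in>TN N. C k * (f s * e k s)) = f s * ((\<Sum>k\<in>TN N. of_real (bK N k) * E k (x - s) * psi k h) / of_real h)"
      unfolding C_def e_def E_diff by (simp add: sum_distrib_left sum_divide_distrib mult_ac)
    also have "\<dots> = f s * ((Psi N (x - s + h) - Psi N (x - s)) / of_real h)"
      by (simp add: Psi_shift)
    finally show "(\<Sum>k\<in>TN N. C k * (f s * e k s)) = f s * ((Psi N (x - s + h) - Psi N (x - s)) / of_real h)" .
  qed
  finally show ?thesis .
qed

lemma floor_a:
  assumes "0 \<le> x" "x < 2*pi" "0 \<le> s" "s \<le> 2*pi" "\<And>j::int. x - s \<noteq> 2 * pi * of_int j"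
  shows "\<lfloor>(x - s) / (2*pi)\<rfloor> = (if s < x then 0 else -1)"
proof (cases "s < x")
  case True
  then show ?thesis using assms by (simp add: floor_eq_iff field_simps)
next
  case False
  have "x - s \<noteq> 2 * pi * of_int (-1)" by (rule assms(5))
  moreover have "x - s \<noteq> 0" using assms(5)[of 0] by simp
  ultimately have "x - s > - 2 * pi" "x - s < 0" using False assms(1-4) by auto
  then show ?thesis using False by (simp add: floor_eq_iff field_simps)
qed

lemma floor_b:
  assumes "0 < x + h" "x + h < 2*pi" "0 \<le> s" "s \<le> 2*pi" "\<And>j::int. x - s + h \<noteq> 2 * pi * of_int j"
  shows "\<lfloor>(x - s + h) / (2*pi)\<rfloor> = (if s < x + h then 0 else -1)"
proof (cases "s < x + h")
  case True
  then show ?thesis using assms by (simp add: floor_eq_iff field_simps)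
next
  case False
  have "x - s + h \<noteq> 0" using assms(5)[of 0] by simp
  then have "x - s + h > - 2 * pi" "x - s + h < 0" using False assms(1-4) by auto
  then show ?thesis using False by (simp add: floor_eq_iff field_simps)
qed

lemma D_lim:
  assumes x: "0 \<le> x" and h: "0 < h" and xh: "x + h < 2*pi" and s: "0 \<le> s" "s \<le> 2*pi"
    and a: "\<And>j::int. x - s \<noteq> 2 * pi * of_int j" and b: "\<And>j::int. x - s + h \<noteq> 2 * pi * of_int j"
  shows "(\<lambda>N. (Phi N (x - s + h) - Phi N (x - s)) / h) \<longlonglongrightarrow> 2 * pi / h * indicator {x..x+h} s"
proof -
  have la: "(\<lambda>N. Phi N (x - s)) \<longlonglongrightarrow> 2 * pi * of_int \<lfloor>(x - s) / (2*pi)\<rfloor> + pi"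
    by (rule Phi_lim) (use a in auto)
  have lb: "(\<lambda>N. Phi N (x - s + h)) \<longlonglongrightarrow> 2 * pi * of_int \<lfloor>(x - s + h) / (2*pi)\<rfloor> + pi"
    by (rule Phi_lim) (use b in auto)
  have lim: "(\<lambda>N. (Phi N (x - s + h) - Phi N (x - s)) / h) \<longlonglongrightarrow>
      ((2 * pi * of_int \<lfloor>(x - s + h) / (2*pi)\<rfloor> + pi) - (2 * pi * of_int \<lfloor>(x - s) / (2*pi)\<rfloor> + pi)) / h"
    using h by (intro tendsto_intros la lb) auto
  moreover have eq: "((2 * pi * of_int \<lfloor>(x - s + h) / (2*pi)\<rfloor> + pi) - (2 * pi * of_int \<lfloor>(x - s) / (2*pi)\<rfloor> + pi)) / h
      = 2 * pi / h * indicator {x..x+h} s"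
  proof -
    have fa: "\<lfloor>(x - s) / (2*pi)\<rfloor> = (if s < x then 0 else -1)"
      by (rule floor_a) (use x xh h s a in auto)
    have fb: "\<lfloor>(x - s + h) / (2*pi)\<rfloor> = (if s < x + h then 0 else -1)"
      by (rule floor_b) (use x xh h s b in auto)
    have sx: "s \<noteq> x" using a[of 0] by auto
    have sxh: "s \<noteq> x + h" using b[of 0] by auto
    show ?thesis unfolding fa fb using sx sxh h by (auto simp: indicator_def)
  qed
  ultimately show ?thesis by metis
qed

lemma Phi_cont: "continuous_on UNIV (Phi N)"
  by (rule continuous_at_imp_continuous_on) (meson DERIV_isCont Phi_deriv)

lemma Phi_meas [measurable]: "Phi N \<in> borel_measurable borel"
  by (rule borel_measurable_continuous_onI[OF Phi_cont])

lemma Q_lim: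
  assumes fi: "set_integrable lborel {0..2*pi} f"
    and x: "0 \<le> x" and h: "0 < h" and xh: "x + h < 2*pi"
  shows "(\<lambda>N. tp (cQ f N h) (TN N) x) \<longlonglongrightarrow> complex_of_real (1/h) * (LINT s:{x..x+h}|lborel. f s)"
proof -
  define F where "F N s = indicator {0..2*pi} s *\<^sub>R (f s * of_real ((Phi N (x - s + h) - Phi N (x - s)) / h))" for N s
  define L where "L s = indicator {0..2*pi} s *\<^sub>R (f s * of_real (2*pi/h * indicator {x..x+h} s))" for s
  define w where "w s = 2*pi/h * (indicator {0..2*pi} s * norm (f s))" for s
  have fI: "integrable lborel (\<lambda>s. indicator {0..2*pi} s *\<^sub>R f s)" using fi unfolding set_integrable_def .
  have fm: "(\<lambda>s. indicator {0..2*pi} s *\<^sub>R f s) \<in> borel_measurable lborel"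
    using fI by (rule borel_measurable_integrable)
  have Qeq: "tp (cQ f N h) (TN N) x = of_real (1/(2*pi)) * integral\<^sup>L lborel (F N)" for N
    unfolding Q_formula[OF fi] F_def set_lebesgue_integral_def Psi_real
    by (simp add: of_real_diff[symmetric] del: of_real_diff)
  have lim: "(\<lambda>N. integral\<^sup>L lborel (F N)) \<longlonglongrightarrow> integral\<^sup>L lborel L"
  proof (rule integral_dominated_convergence[where w = w])
    show "L \<in> borel_measurable lborel"
    proof -
      have "(\<lambda>s. (indicator {0..2*pi} s *\<^sub>R f s) * of_real (2*pi/h * indicator {x..x+h} s)) \<in> borel_measurable lborel"
        using fm by measurable
      moreover have "L = (\<lambda>s. (indicator {0..2*pi} s *\<^sub>R f s) * of_real (2*pi/h * indicator {x..x+h} s))"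
        unfolding L_def by (simp only: mult_scaleR_left)
      ultimately show ?thesis by simp
    qed
    show "F N \<in> borel_measurable lborel" for N
    proof -
      have "(\<lambda>s. (indicator {0..2*pi} s *\<^sub>R f s) * of_real ((Phi N (x - s + h) - Phi N (x - s)) / h)) \<in> borel_measurable lborel"
        using fm by measurable
      moreover have "F N = (\<lambda>s. (indicator {0..2*pi} s *\<^sub>R f s) * of_real ((Phi N (x - s + h) - Phi N (x - s)) / h))"
        unfolding F_def by (simp only: mult_scaleR_left)
      ultimately show ?thesis by simp
    qed
    show "integrable lborel w"
      unfolding w_def using integrable_norm[OF fI] by (intro integrable_mult_right) (simp add: abs_mult)
    define Ex where "Ex = range (\<lambda>j::int. x - 2 * pi * of_int j) \<union> range (\<lambda>j::int. x + h - 2 * pi * of_int j)"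
    have "countable Ex" unfolding Ex_def by auto
    then have "AE s in lborel. s \<notin> Ex" by (intro AE_not_in countable_imp_null_set_lborel)
    then show "AE s in lborel. (\<lambda>N. F N s) \<longlonglongrightarrow> L s"
    proof (rule AE_mp, intro AE_I2 impI)
      fix s assume s: "s \<notin> Ex"
      show "(\<lambda>N. F N s) \<longlonglongrightarrow> L s"
      proof (cases "s \<in> {0..2*pi}")
        case False
        then show ?thesis unfolding F_def L_def by simp
      next
        case True
        have a: "x - s \<noteq> 2 * pi * of_int j" for j
          using s unfolding Ex_def by (auto simp: algebra_simps)
        have b: "x - s + h \<noteq> 2 * pi * of_int j" for j
        proof
          assume "x - s + h = 2 * pi * of_int j"
          then have "s = x + h - 2 * pi * of_int j" by simp
          then show False using s unfolding Ex_def by auto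
        qed
        have "(\<lambda>N. (Phi N (x - s + h) - Phi N (x - s)) / h) \<longlonglongrightarrow> 2 * pi / h * indicator {x..x+h} s"
          using True by (intro D_lim x h xh a b) auto
        then have "(\<lambda>N. f s * of_real ((Phi N (x - s + h) - Phi N (x - s)) / h)) \<longlonglongrightarrow> f s * of_real (2 * pi / h * indicator {x..x+h} s)"
          by (intro tendsto_intros)
        then show ?thesis unfolding F_def L_def using True by simp
      qed
    qed
    show "AE s in lborel. norm (F N s) \<le> w s" for N
    proof (rule AE_I2)
      fix s
      have "0 \<le> Phi N (x - s + h) - Phi N (x - s) \<and> Phi N (x - s + h) - Phi N (x - s) \<le> 2 * pi"
        using Phi_incr_bound[of h N "x - s"] h xh x by simp
      then have "\<bar>(Phi N (x - s + h) - Phi N (x - s)) / h\<bar> \<le> 2 * pi / h"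
        using h by (simp add: divide_right_mono)
      then have "norm (f s) * \<bar>(Phi N (x - s + h) - Phi N (x - s)) / h\<bar> \<le> norm (f s) * (2 * pi / h)"
        by (intro mult_left_mono) auto
      moreover have "norm (F N s) = indicator {0..2*pi} s * (norm (f s) * \<bar>(Phi N (x - s + h) - Phi N (x - s)) / h\<bar>)"
        unfolding F_def by (cases "s \<in> {0..2*pi}") (simp_all add: norm_mult del: of_real_diff of_real_divide)
      ultimately show "norm (F N s) \<le> w s"
        unfolding w_def by (cases "s \<in> {0..2*pi}") (simp_all add: mult_ac)
    qed
  qed
  have intL: "integral\<^sup>L lborel L = of_real (2*pi/h) * (LINT s:{x..x+h}|lborel. f s)"
  proof -
    have "L = (\<lambda>s. of_real (2*pi/h) * (indicator {x..x+h} s *\<^sub>R f s))"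
      unfolding L_def using x xh h by (auto simp: indicator_def)
    then show ?thesis unfolding set_lebesgue_integral_def by (simp only: integral_mult_right_zero)
  qed
  have "(\<lambda>N. of_real (1/(2*pi)) * integral\<^sup>L lborel (F N)) \<longlonglongrightarrow> of_real (1/(2*pi)) * integral\<^sup>L lborel L"
    by (intro tendsto_intros lim)
  moreover have "of_real (1/(2*pi)) * integral\<^sup>L lborel L = complex_of_real (1/h) * (LINT s:{x..x+h}|lborel. f s)"
    unfolding intL using h by (simp add: of_real_mult[symmetric] del: of_real_mult)
  ultimately show ?thesis unfolding Qeq by simp
qed

definition Bc :: "real \<Rightarrow> real \<Rightarrow> real" where
  "Bc p A = (2*A) powr p + 4 * 2 powr p * (2*A) powr (p-2) * (p/(p-2)) * (2*p) powr ((p-2)/2) * A\<^sup>2"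

lemma Bc_nonneg: "p > 2 \<Longrightarrow> A \<ge> 0 \<Longrightarrow> Bc p A \<ge> 0"
  unfolding Bc_def by simp

lemma tp_Lp':
  fixes p s A :: real and c :: "int \<Rightarrow> complex" and T :: "int set"
  assumes p: "p > 2" and ps: "1/p + s = 1/2" and T: "finite T" and A: "A \<ge> 0"
    and cA: "(\<Sum>k\<in>T. wt s k * (norm (c k))\<^sup>2) \<le> A\<^sup>2"
  shows "integral {0..2*pi} (\<lambda>x. norm (tp c T x) powr p) \<le> 2 * pi * Bc p A"
proof (cases "A = 0")
  case False
  then show ?thesis using tp_Lp[OF p ps T _ cA] A unfolding Bc_def by simp
next
  case True
  have "(\<Sum>k\<in>T. wt s k * (norm (c k))\<^sup>2) = 0"
  proof -
    have "0 \<le> (\<Sum>k\<in>T. wt s k * (norm (c k))\<^sup>2)" by (intro sum_nonneg) (simp add: wt_pos less_imp_le)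
    then show ?thesis using cA True by simp
  qed
  then have "\<forall>k\<in>T. wt s k * (norm (c k))\<^sup>2 = 0"
    using T by (subst sum_nonneg_eq_0_iff[symmetric]) (auto simp: wt_pos less_imp_le)
  then have c0: "\<forall>k\<in>T. c k = 0" using wt_pos by (metis mult_eq_0_iff norm_eq_zero not_less_iff_gr_or_eq zero_eq_power2)
  then have "tp c T x = 0" for x unfolding tp_def by simp
  then show ?thesis using True p by (simp add: Bc_def)
qed

lemma norm_psi_le:
  assumes h: "0 < h" shows "norm (psi k h) \<le> h"
proof (cases "k = 0")
  case True then show ?thesis using h by (simp add: psi_def)
next
  case False
  have "E k h = exp (\<i> * of_real (of_int k * h))" unfolding E_def by (simp add: mult.assoc)
  note e = this
  have "norm (E k h - 1) = 2 * \<bar>sin (of_int k * h / 2)\<bar>" unfolding e by (rule dist_exp_i_1)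
  also have "\<dots> \<le> 2 * \<bar>of_int k * h / 2\<bar>" by (intro mult_left_mono abs_sin_x_le_abs_x) simp
  also have "\<dots> = \<bar>of_int k\<bar> * h" using h by (simp add: abs_mult)
  finally have n: "norm (E k h - 1) \<le> \<bar>of_int k\<bar> * h" .
  have "norm (psi k h) = norm (E k h - 1) / \<bar>of_int k\<bar>"
    using False by (simp add: psi_def norm_divide norm_mult)
  also have "\<dots> \<le> h" using n False by (simp add: divide_le_eq mult.commute)
  finally show ?thesis .
qed

lemma norm_cQ_le:
  assumes h: "0 < h" shows "norm (cQ f N h k) \<le> norm (fourier_coeff f k)"
proof -
  have "norm (psi k h / of_real h) \<le> 1" using norm_psi_le[OF h, of k] h by (simp add: norm_divide divide_le_eq)
  moreover have "norm (complex_of_real (bK N k)) \<le> 1" using bK_le1 bK_nonneg by simp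
  ultimately have "norm (of_real (bK N k) * (psi k h / of_real h)) \<le> 1 * 1"
    unfolding norm_mult by (intro mult_mono) auto
  then have "norm (of_real (bK N k) * (psi k h / of_real h)) * norm (fourier_coeff f k) \<le> 1 * norm (fourier_coeff f k)"
    by (intro mult_right_mono) auto
  then show ?thesis unfolding cQ_def norm_mult[of _ "fourier_coeff f k"] by simp
qed

lemma nn_integral_of_integral:
  assumes "continuous_on {0..2*pi} g" "\<And>x. g x \<ge> 0"
  shows "(\<integral>\<^sup>+ x. ennreal (indicator {0..2*pi} x * g x) \<partial>lborel) = ennreal (integral {0..2*pi} g)"
proof -
  have "(g has_integral integral {0..2*pi} g) {0..2*pi}"
    using assms(1) by (intro integrable_integral integrable_continuous_interval)
  from nn_integral_has_integral_lebesgue[OF _ this] assms(2)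
  show ?thesis by simp
qed

lemma Q_nn_bound:
  fixes p s :: real
  assumes p: "p > 2" and ps: "1/p + s = 1/2" and h: "0 < h"
    and summ: "(\<lambda>k::int. (1 + (real_of_int k)\<^sup>2) powr s * (norm (fourier_coeff f k))\<^sup>2) summable_on UNIV"
  shows "(\<integral>\<^sup>+ x. ennreal (indicator {0..2*pi} x * norm (tp (cQ f N h) (TN N) x) powr p) \<partial>lborel)
      \<le> ennreal (2 * pi * Bc p (Hs_norm_2pi s f))"
proof -
  define A where "A = Hs_norm_2pi s f"
  have inn: "0 \<le> (\<Sum>\<^sub>\<infinity>k::int. (1 + (real_of_int k)\<^sup>2) powr s * (norm (fourier_coeff f k))\<^sup>2)"
    by (rule infsum_nonneg) simp
  have A0: "A \<ge> 0" unfolding A_def Hs_norm_2pi_def using inn by simp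
  have "(\<Sum>k\<in>TN N. wt s k * (norm (cQ f N h k))\<^sup>2) \<le> (\<Sum>k\<in>TN N. wt s k * (norm (fourier_coeff f k))\<^sup>2)"
    using norm_cQ_le[OF h] by (intro sum_mono mult_left_mono power_mono) (auto simp: wt_pos less_imp_le)
  also have "\<dots> \<le> (\<Sum>\<^sub>\<infinity>k::int. (1 + (real_of_int k)\<^sup>2) powr s * (norm (fourier_coeff f k))\<^sup>2)"
    unfolding wt_def by (rule finite_sum_le_infsum[OF summ]) auto
  also have "\<dots> = A\<^sup>2"
    unfolding A_def Hs_norm_2pi_def using inn by simp
  finally have cA: "(\<Sum>k\<in>TN N. wt s k * (norm (cQ f N h k))\<^sup>2) \<le> A\<^sup>2" .
  have int: "integral {0..2*pi} (\<lambda>x. norm (tp (cQ f N h) (TN N) x) powr p) \<le> 2 * pi * Bc p A"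
    by (rule tp_Lp'[OF p ps finite_TN A0 cA])
  have "(\<integral>\<^sup>+ x. ennreal (indicator {0..2*pi} x * norm (tp (cQ f N h) (TN N) x) powr p) \<partial>lborel)
      = ennreal (integral {0..2*pi} (\<lambda>x. norm (tp (cQ f N h) (TN N) x) powr p))"
    using p by (intro nn_integral_of_integral continuous_on_powr' continuous_intros) auto
  also have "\<dots> \<le> ennreal (2 * pi * Bc p A)" using int by (rule ennreal_leI)
  finally show ?thesis unfolding A_def .
qed

definition hn :: "nat \<Rightarrow> real" where "hn n = 1 / (real n + 1)"

lemma hn_pos: "hn n > 0" unfolding hn_def by simp

lemma hn_lim: "hn \<longlonglongrightarrow> 0"
  unfolding hn_def using LIMSEQ_inverse_real_of_nat by (simp add: inverse_eq_divide add.commute)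

lemma diff_lim:
  fixes f :: "real \<Rightarrow> complex"
  assumes fi: "set_integrable lborel {0..2*pi} f"
  shows "AE x in lborel. x \<in> {0..<2*pi} \<longrightarrow>
     (\<lambda>n. complex_of_real (1 / hn n) * (LINT s:{x..x + hn n}|lborel. f s)) \<longlonglongrightarrow> f x"
proof -
  define g where "g s = indicator {0..2*pi} s *\<^sub>R f s" for s
  have gI: "integrable lborel g" using fi unfolding set_integrable_def g_def .
  have gcb: "g integrable_on cbox a b" for a b
    using integrable_on_lborel[OF gI] by (rule integrable_on_subcbox) simp
  obtain Ng where Ng: "negligible Ng"
    and conv: "\<And>x e. \<lbrakk>x \<notin> Ng; 0 < e\<rbrakk> \<Longrightarrow>
        \<exists>d>0. \<forall>h. 0 < h \<and> h < d \<longrightarrow> norm (integral (cbox x (x + h *\<^sub>R One)) g /\<^sub>R h ^ DIM(real) - g x) < e"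
    using integrable_ccontinuous_explicit[of g] gcb by blast
  have "AE x in lebesgue. x \<notin> Ng"
    using Ng by (intro AE_not_in) (simp add: negligible_iff_null_sets)
  then have ae: "AE x in lborel. x \<notin> Ng" by (simp add: AE_completion_iff)
  show ?thesis
  proof (rule AE_mp[OF ae], intro AE_I2 impI)
    fix x assume xN: "x \<notin> Ng" and x: "x \<in> {0..<2*pi}"
    show "(\<lambda>n. complex_of_real (1 / hn n) * (LINT s:{x..x + hn n}|lborel. f s)) \<longlonglongrightarrow> f x"
    proof (rule tendstoI)
      fix e :: real assume e: "0 < e"
      obtain d where d: "d > 0" and dh: "\<And>h. 0 < h \<Longrightarrow> h < d \<Longrightarrow>
          norm (integral (cbox x (x + h *\<^sub>R One)) g /\<^sub>R h ^ DIM(real) - g x) < e"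
        using conv[OF xN e] by blast
      have ev1: "eventually (\<lambda>n. hn n < min d (2*pi - x)) sequentially"
        using hn_lim d x by (intro order_tendstoD(2)) auto
      show "eventually (\<lambda>n. dist (complex_of_real (1 / hn n) * (LINT s:{x..x + hn n}|lborel. f s)) (f x) < e) sequentially"
        using ev1
      proof eventually_elim
        case (elim n)
        define h where "h = hn n"
        have h: "0 < h" "h < d" "x + h < 2*pi" using elim hn_pos[of n] unfolding h_def by auto
        have sub: "{x..x+h} \<subseteq> {0..2*pi}" using x h by auto
        have fi2: "set_integrable lborel {x..x+h} f"
          using fi by (rule set_integrable_subset) (use sub in auto)
        have "integral (cbox x (x + h *\<^sub>R One)) g = integral {x..x+h} f"
        proof -
          have "integral {x..x+h} g = integral {x..x+h} f"
            by (rule integral_cong) (use sub in \<open>auto simp: g_def\<close>)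
          then show ?thesis by simp
        qed
        also have "\<dots> = (LINT s:{x..x+h}|lborel. f s)"
          using set_borel_integral_eq_integral(2)[OF fi2] by simp
        finally have i: "integral (cbox x (x + h *\<^sub>R One)) g = (LINT s:{x..x+h}|lborel. f s)" .
        have gx: "g x = f x" using x unfolding g_def by simp
        have "norm ((LINT s:{x..x+h}|lborel. f s) /\<^sub>R h - f x) < e"
          using dh[OF h(1,2)] unfolding i gx by simp
        then show ?case unfolding h_def[symmetric] dist_norm
          by (simp add: scaleR_conv_of_real divide_inverse mult.commute)
      qed
    qed
  qed
qed

lemma tp_meas [measurable]: "tp c T \<in> borel_measurable borel"
  by (rule borel_measurable_continuous_onI) (intro continuous_intros)

lemma main_nn_bound:
  fixes p s :: real and f :: "real \<Rightarrow> complex"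
  assumes p: "p > 2" and ps: "1/p + s = 1/2" and Hs: "in_Hs_2pi s f"
  shows "(\<integral>\<^sup>+ x. ennreal (indicator {0..2*pi} x * norm (f x) powr p) \<partial>lborel)
      \<le> ennreal (2 * pi * Bc p (Hs_norm_2pi s f))"
proof -
  have L2: "in_Lp_2pi 2 f" and summ: "(\<lambda>k::int. (1 + (real_of_int k)\<^sup>2) powr s * (norm (fourier_coeff f k))\<^sup>2) summable_on UNIV"
    using Hs unfolding in_Hs_2pi_def by auto
  have fm: "f \<in> borel_measurable lborel" using L2 unfolding in_Lp_2pi_def periodic_2pi_def by auto
  have fin: "(\<integral>\<^sup>+ t. ennreal (indicator {0..2*pi} t * norm (f t) powr 2) \<partial>lborel) < \<infinity>"
    using L2 unfolding in_Lp_2pi_def by auto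
  have fi: "set_integrable lborel {0..2*pi} f" by (rule L2_imp_L1[OF fm fin])
  define B where "B = ennreal (2 * pi * Bc p (Hs_norm_2pi s f))"
  define u where "u n N x = ennreal (indicator {0..2*pi} x * norm (tp (cQ f N (hn n)) (TN N) x) powr p)" for n N x
  define G where "G n x = liminf (\<lambda>N. u n N x)" for n x
  define F where "F n x = complex_of_real (1 / hn n) * (LINT s:{x..x + hn n}|lborel. f s)" for n x
  have um: "u n N \<in> borel_measurable lborel" for n N unfolding u_def by measurable
  have Gm: "G n \<in> borel_measurable lborel" for n unfolding G_def using um by measurable
  have G_bound: "integral\<^sup>N lborel (G n) \<le> B" for n
  proof -
    have "integral\<^sup>N lborel (G n) \<le> liminf (\<lambda>N. integral\<^sup>N lborel (u n N))"
      unfolding G_def by (rule nn_integral_liminf[OF um])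
    also have "\<dots> \<le> B"
    proof (rule Liminf_le)
      show "\<forall>\<^sub>F N in sequentially. integral\<^sup>N lborel (u n N) \<le> B"
        unfolding u_def B_def using Q_nn_bound[OF p ps hn_pos summ] by simp
    qed simp
    finally show ?thesis .
  qed
  have G_eq: "G n x = ennreal (norm (F n x) powr p)" if x: "x \<in> {0..<2*pi}" "x + hn n < 2*pi" for n x
  proof -
    have "(\<lambda>N. tp (cQ f N (hn n)) (TN N) x) \<longlonglongrightarrow> F n x"
      unfolding F_def using x by (intro Q_lim[OF fi _ hn_pos]) auto
    then have "(\<lambda>N. norm (tp (cQ f N (hn n)) (TN N) x) powr p) \<longlonglongrightarrow> norm (F n x) powr p"
      using p by (intro tendsto_powr' tendsto_norm tendsto_const) auto
    then have "(\<lambda>N. u n N x) \<longlonglongrightarrow> ennreal (norm (F n x) powr p)"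
      unfolding u_def using x by (intro tendsto_ennrealI) simp
    then show ?thesis unfolding G_def by (intro lim_imp_Liminf) auto
  qed
  have ae: "AE x in lborel. ennreal (indicator {0..2*pi} x * norm (f x) powr p) \<le> liminf (\<lambda>n. G n x)"
  proof -
    have "AE x in lborel. x \<notin> {2*pi}" by (intro AE_not_in countable_imp_null_set_lborel) simp
    then have "AE x in lborel. x \<noteq> 2*pi" by simp
    with diff_lim[OF fi] show ?thesis
    proof eventually_elim
      case (elim x)
      show ?case
      proof (cases "x \<in> {0..<2*pi}")
        case False
        then have "x \<notin> {0..2*pi}" using elim by auto
        then show ?thesis by simp
      next
        case True
        have Fl: "(\<lambda>n. F n x) \<longlonglongrightarrow> f x" using elim True unfolding F_def by simp
        have ev: "eventually (\<lambda>n. x + hn n < 2*pi) sequentially"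
          using hn_lim True by (intro order_tendstoD(2)[of hn 0 _ "2*pi - x", THEN eventually_mono]) auto
        have "(\<lambda>n. ennreal (norm (F n x) powr p)) \<longlonglongrightarrow> ennreal (norm (f x) powr p)"
          using p by (intro tendsto_ennrealI tendsto_powr' tendsto_norm tendsto_const Fl) auto
        moreover have "eventually (\<lambda>n. ennreal (norm (F n x) powr p) = G n x) sequentially"
          using ev by eventually_elim (use G_eq True in auto)
        ultimately have "(\<lambda>n. G n x) \<longlonglongrightarrow> ennreal (norm (f x) powr p)"
          by (rule Lim_transform_eventually)
        then have "liminf (\<lambda>n. G n x) = ennreal (norm (f x) powr p)"
          by (intro lim_imp_Liminf) auto
        then show ?thesis using True by simp
      qed
    qed
  qed
  have "(\<integral>\<^sup>+ x. ennreal (indicator {0..2*pi} x * norm (f x) powr p) \<partial>lborel) \<le> (\<integral>\<^sup>+ x. liminf (\<lambda>n. G n x) \<partial>lborel)"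
    by (rule nn_integral_mono_AE[OF ae])
  also have "\<dots> \<le> liminf (\<lambda>n. integral\<^sup>N lborel (G n))"
    by (rule nn_integral_liminf[OF Gm])
  also have "\<dots> \<le> B"
    by (rule Liminf_le) (use G_bound in auto)
  finally show ?thesis unfolding B_def .
qed

lemma Bc_le:
  fixes p A :: real assumes p: "p > 2" and A: "A \<ge> 0"
  shows "Bc p A \<le> 2 powr p * (5 * (p/(p-2)) * 4 powr (p-2) * p powr ((p-2)/2)) * A powr p"
proof (cases "A = 0")
  case True
  then show ?thesis using p by (simp add: Bc_def)
next
  case False
  then have A0: "A > 0" using A by simp
  define X where "X = (p/(p-2)) * 4 powr (p-2) * p powr ((p-2)/2)"
  have X1: "1 \<le> X"
  proof -
    have a: "1 \<le> p/(p-2)" using p by simp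
    have b: "1 \<le> (4::real) powr (p-2)" using p by (intro ge_one_powr_ge_zero) auto
    have c: "1 \<le> p powr ((p-2)/2)" using p by (intro ge_one_powr_ge_zero) auto
    have "1 * 1 * 1 \<le> X" unfolding X_def using a b c p
      by (intro mult_mono) auto
    then show ?thesis by simp
  qed
  have e1: "(2*A) powr p = 2 powr p * A powr p" using A0 by (simp add: powr_mult)
  have e2: "(2*A) powr (p-2) * A\<^sup>2 = 2 powr (p-2) * A powr p"
  proof -
    have "A\<^sup>2 = A powr 2" using A0 by (simp add: powr_numeral)
    then have "(2*A) powr (p-2) * A\<^sup>2 = 2 powr (p-2) * (A powr (p-2) * A powr 2)"
      using A0 by (simp add: powr_mult mult_ac)
    also have "A powr (p-2) * A powr 2 = A powr p" by (simp add: powr_add[symmetric])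
    finally show ?thesis .
  qed
  have e3: "(2*p) powr ((p-2)/2) = 2 powr ((p-2)/2) * p powr ((p-2)/2)" using p by (simp add: powr_mult)
  have e4: "2 powr (p-2) * 2 powr ((p-2)/2) \<le> (4::real) powr (p-2)"
  proof -
    have "(2::real) powr (p-2) * 2 powr ((p-2)/2) = 2 powr ((p-2) + (p-2)/2)" by (simp add: powr_add)
    also have "\<dots> \<le> 2 powr (2 * (p-2))" using p by (intro powr_mono) (auto simp: field_simps)
    also have "\<dots> = ((2::real) powr 2) powr (p-2)" by (rule powr_powr[symmetric])
    also have "\<dots> = 4 powr (p-2)" by simp
    finally show ?thesis .
  qed
  have "Bc p A = 2 powr p * A powr p + 4 * 2 powr p * (p/(p-2)) * p powr ((p-2)/2) * (2 powr (p-2) * 2 powr ((p-2)/2)) * A powr p"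
    unfolding Bc_def e1 e3 using e2 by (simp add: mult_ac)
  also have "\<dots> \<le> 2 powr p * A powr p + 4 * 2 powr p * (p/(p-2)) * p powr ((p-2)/2) * 4 powr (p-2) * A powr p"
    using e4 p by (intro add_left_mono mult_right_mono mult_left_mono) auto
  also have "\<dots> = 2 powr p * A powr p * (1 + 4 * X)" unfolding X_def by (simp add: algebra_simps)
  also have "\<dots> \<le> 2 powr p * A powr p * (5 * X)" using X1 by (intro mult_left_mono) auto
  also have "\<dots> = 2 powr p * (5 * X) * A powr p" by simp
  finally show ?thesis unfolding X_def by (simp only: mult_ac)
qed

theorem proposition7p6:
  shows "\<exists>C1::real. \<exists>C2::real. C1 > 0 \<and> C2 > 0 \<and>
    (\<forall>p s::real. 2 < p \<longrightarrow> 0 < s \<longrightarrow> s < 1/2 \<longrightarrow> 1 / p + s = 1 / 2 \<longrightarrow>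
      (\<forall>f. in_Hs_2pi s f \<longrightarrow>
         in_Lp_2pi p f \<and>
         Lp_norm_2pi p f \<le> 2 * (C1 * (p / (p - 2)) * C2 powr (p - 2) * p powr ((p - 2) / 2)) powr (1 / p)
                              * Hs_norm_2pi s f))"
proof (intro exI conjI allI impI)
  show "(5::real) > 0" "(4::real) > 0" by simp_all
  fix p s :: real and f :: "real \<Rightarrow> complex"
  assume p: "2 < p" and s0: "0 < s" and s1: "s < 1/2" and ps: "1 / p + s = 1 / 2" and Hs: "in_Hs_2pi s f"
  define A where "A = Hs_norm_2pi s f"
  define K where "K = 5 * (p/(p-2)) * 4 powr (p-2) * p powr ((p-2)/2)"
  have K0: "K > 0" unfolding K_def using p by simp
  have A0: "A \<ge> 0"
  proof -
    have "0 \<le> (\<Sum>\<^sub>\<infinity>k::int. (1 + (real_of_int k)\<^sup>2) powr s * (norm (fourier_coeff f k))\<^sup>2)"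
      by (rule infsum_nonneg) simp
    then show ?thesis unfolding A_def Hs_norm_2pi_def by simp
  qed
  have per: "periodic_2pi f" using Hs unfolding in_Hs_2pi_def in_Lp_2pi_def by auto
  have fm: "f \<in> borel_measurable lborel" using per unfolding periodic_2pi_def by auto
  have nn: "(\<integral>\<^sup>+ x. ennreal (indicator {0..2*pi} x * norm (f x) powr p) \<partial>lborel) \<le> ennreal (2 * pi * Bc p A)"
    unfolding A_def by (rule main_nn_bound[OF p ps Hs])
  then have fin: "(\<integral>\<^sup>+ x. ennreal (indicator {0..2*pi} x * norm (f x) powr p) \<partial>lborel) < \<infinity>"
    using le_less_trans by fastforce
  show "in_Lp_2pi p f" unfolding in_Lp_2pi_def using per fin by simp
  define I where "I = (LINT t:{0..2*pi}|lborel. norm (f t) powr p)"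
  have I_eq: "I = enn2real (\<integral>\<^sup>+ x. ennreal (indicator {0..2*pi} x * norm (f x) powr p) \<partial>lborel)"
    unfolding I_def set_lebesgue_integral_def using fm
    by (subst integral_eq_nn_integral) (auto simp: mult.commute)
  have I0: "0 \<le> I" unfolding I_eq by simp
  have Ib: "I \<le> 2 * pi * Bc p A"
    unfolding I_eq using nn Bc_nonneg[OF p A0] by (intro enn2real_leI) auto
  have "Lp_norm_2pi p f = ((1/(2*pi)) * I) powr (1/p)" unfolding Lp_norm_2pi_def I_def ..
  also have "\<dots> \<le> (Bc p A) powr (1/p)"
    using I0 Ib p by (intro powr_mono2) (auto simp: field_simps)
  also have "\<dots> \<le> (2 powr p * K * A powr p) powr (1/p)"
    using Bc_le[OF p A0] Bc_nonneg[OF p A0] p unfolding K_def by (intro powr_mono2) auto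
  also have "\<dots> = 2 * K powr (1/p) * A"
  proof -
    have "(2 powr p * K * A powr p) powr (1/p) = (2 powr p) powr (1/p) * K powr (1/p) * (A powr p) powr (1/p)"
      using K0 A0 by (simp add: powr_mult)
    also have "(2 powr p) powr (1/p) = (2::real)" using p by (simp add: powr_powr)
    also have "(A powr p) powr (1/p) = A" using p A0 by (simp add: powr_powr)
    finally show ?thesis .
  qed
  finally show "Lp_norm_2pi p f \<le> 2 * (5 * (p / (p - 2)) * 4 powr (p - 2) * p powr ((p - 2) / 2)) powr (1 / p) * Hs_norm_2pi s f"
    unfolding K_def A_def .
qed

end
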